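(* Consider the K-AVG algorithm (described in the context) run with a fixed stepsize $\gamma_n=\bar\gamma>0$ and a fixed batch size $B_n=\bar B$ for all $n$, where for some constant $0<\delta<1$, $$1\ \ge\ \frac{L^2\bar\gamma^2(K+1)(K-2)}{2}+L\bar\gamma K \qquad\text{and}\qquad 1-\delta\ \ge\ L^2\bar\gamma^2 .$$ Then for every $N\in\mathbb{N}$, $$\frac{1}{N}\,\mathbb{E}\sum_{j=1}^N\big\|\nabla F(\widetilde w_j)\big\|_2^2\ \le\ \frac{2\big(F(\widetilde w_1)-F^*\big)}{N(K-1+\delta)\bar\gamma}+\frac{LK\bar\gamma M}{\bar B(K-1+\delta)}\Big(\frac{K}{P}+\frac{L(2K-1)(K-1)\bar\gamma}{6}\Big).$$
   Context: Let $F:\mathbb{R}^d\to\mathbb{R}$ be continuously differentiable with $L$-Lipschitz gradient ($L>0$): $\|\nabla F(w)-\nabla F(w')\|_2\le L\|w-w'\|_2$ for all $w,w'$. Let $\xi$ be a random variable and $(w,\xi)\mapsto\nabla F(w;\xi)\in\mathbb{R}^d$ a stochastic gradient satisfying, for every fixed $w$, $\mathbb{E}_\xi\nabla F(w;\xi)=\nabla F(w)$ and $\mathbb{E}_\xi\|\nabla F(w;\xi)\|_2^2-\|\mathbb{E}_\xi\nabla F(w;\xi)\|_2^2\le M$ for a constant $M\ge0$. K-AVG algorithm with $P\ge1$ processors, delay $K\ge1$, stepsizes $\gamma_n>0$ and batch sizes $B_n\ge1$: start from a deterministic $\widetilde w_1\in\mathbb{R}^d$. For $n=1,2,\dots$: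 each processor $j=1,\dots,P$ sets $w^j_{n,0}=\widetilde w_n$ and for $k=1,\dots,K$ updates $w^j_{n,k}=w^j_{n,k-1}-\frac{\gamma_n}{B_n}\sum_{s=1}^{B_n}\nabla F(w^j_{n,k-1};\xi^j_{n,k,s})$; then $\widetilde w_{n+1}=\frac1P\sum_{j=1}^P w^j_{n,K}$. All samples $\xi^j_{n,k,s}$ (over all $n,j,k,s$) are i.i.d. copies of $\xi$. It is assumed that there is a scalar $F^*$ with $F\ge F^*$ on an open set containing all iterates (in particular $F(\widetilde w_n)\ge F^*$ for all $n$). $\mathbb{E}$ denotes total expectation over all samples. *)

theory Defs
  imports "HOL-Probability.Probability"
begin

text \<open>K-AVG iterates. G is the stochastic gradient, gam the stepsizes, B the batch sizes,
  xi n j k s is the sample used in round n, processor j, local step k, batch element s.\<close>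

primrec kavg_local ::
  "('a::real_vector \<Rightarrow> 'x \<Rightarrow> 'a) \<Rightarrow> (nat \<Rightarrow> real) \<Rightarrow> (nat \<Rightarrow> nat)
   \<Rightarrow> (nat \<Rightarrow> nat \<Rightarrow> nat \<Rightarrow> nat \<Rightarrow> 'b \<Rightarrow> 'x)
   \<Rightarrow> nat \<Rightarrow> nat \<Rightarrow> 'a \<Rightarrow> nat \<Rightarrow> 'b \<Rightarrow> 'a" where
  "kavg_local G gam B xi n j w 0 \<omega> = w"
| "kavg_local G gam B xi n j w (Suc k) \<omega> =
     (let v = kavg_local G gam B xi n j w k \<omega>
      in v - (gam n / real (B n)) *\<^sub>R (\<Sum>s=1..B n. G v (xi n j (Suc k) s \<omega>)))"

text \<open>kavg_aux ... m = tilde w_(m+1).\<close>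
primrec kavg_aux ::
  "('a::real_vector \<Rightarrow> 'x \<Rightarrow> 'a) \<Rightarrow> (nat \<Rightarrow> real) \<Rightarrow> (nat \<Rightarrow> nat)
   \<Rightarrow> (nat \<Rightarrow> nat \<Rightarrow> nat \<Rightarrow> nat \<Rightarrow> 'b \<Rightarrow> 'x)
   \<Rightarrow> nat \<Rightarrow> nat \<Rightarrow> 'a \<Rightarrow> nat \<Rightarrow> 'b \<Rightarrow> 'a" where
  "kavg_aux G gam B xi P K w1 0 \<omega> = w1"
| "kavg_aux G gam B xi P K w1 (Suc m) \<omega> =
     (1 / real P) *\<^sub>R (\<Sum>j=1..P. kavg_local G gam B xi (Suc m) j (kavg_aux G gam B xi P K w1 m \<omega>) K \<omega>)"

definition kavg_tilde ::
  "('a::real_vector \<Rightarrow> 'x \<Rightarrow> 'a) \<Rightarrow> (nat \<Rightarrow> real) \<Rightarrow> (nat \<Rightarrow> nat)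
   \<Rightarrow> (nat \<Rightarrow> nat \<Rightarrow> nat \<Rightarrow> nat \<Rightarrow> 'b \<Rightarrow> 'x)
   \<Rightarrow> nat \<Rightarrow> nat \<Rightarrow> 'a \<Rightarrow> nat \<Rightarrow> 'b \<Rightarrow> 'a" where
  "kavg_tilde G gam B xi P K w1 n \<omega> = kavg_aux G gam B xi P K w1 (n - 1) \<omega>"

end

theory Submission
  imports Defs "HOL-Probability.Probability"
begin

locale kavg =
  fixes F :: "'a::euclidean_space \<Rightarrow> real"
    and gradF :: "'a \<Rightarrow> 'a"
    and L M gbar :: real
    and P K Bb :: nat
    and D :: "'x measure"
    and G :: "'a \<Rightarrow> 'x \<Rightarrow> 'a"
    and MO :: "'b measure"
    and xi :: "nat \<Rightarrow> nat \<Rightarrow> nat \<Rightarrow> nat \<Rightarrow> 'b \<Rightarrow> 'x"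
  assumes deriv: "\<And>w. (F has_derivative (\<lambda>h. gradF w \<bullet> h)) (at w)"
    and L_pos: "L > 0"
    and lipschitz: "\<And>w w'. norm (gradF w - gradF w') \<le> L * norm (w - w')"
    and D_prob: "prob_space D"
    and G_meas: "(\<lambda>(w, x). G w x) \<in> borel_measurable (borel \<Otimes>\<^sub>M D)"
    and G_int: "\<And>w. integrable D (G w)"
    and G_sq_int: "\<And>w. integrable D (\<lambda>x. (norm (G w x))\<^sup>2)"
    and unbiased: "\<And>w. (\<integral>x. G w x \<partial>D) = gradF w"
    and M_nonneg: "M \<ge> 0"
    and variance: "\<And>w. (\<integral>x. (norm (G w x))\<^sup>2 \<partial>D) - (norm (\<integral>x. G w x \<partial>D))\<^sup>2 \<le> M"
    and P_pos: "P \<ge> 1" and K_pos: "K \<ge> 1"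
    and gbar_pos: "gbar > 0" and Bb_pos: "Bb \<ge> 1"
    and prob: "prob_space MO"
    and xi_meas: "\<And>n j k s. 1 \<le> n \<Longrightarrow> j \<in> {1..P} \<Longrightarrow> k \<in> {1..K} \<Longrightarrow> s \<in> {1..Bb} \<Longrightarrow>
        xi n j k s \<in> measurable MO D"
    and xi_indep: "prob_space.indep_vars MO (\<lambda>_. D) (\<lambda>(n, j, k, s). xi n j k s)
                     {(n, j, k, s). 1 \<le> n \<and> j \<in> {1..P} \<and> k \<in> {1..K} \<and> s \<in> {1..Bb}}"
    and xi_distr: "\<And>n j k s. 1 \<le> n \<Longrightarrow> j \<in> {1..P} \<Longrightarrow> k \<in> {1..K} \<Longrightarrow> s \<in> {1..Bb} \<Longrightarrow>
        distr MO D (xi n j k s) = D"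
begin

definition Iset :: "(nat \<times> nat \<times> nat \<times> nat) set" where
  "Iset = {(n, j, k, s). 1 \<le> n \<and> j \<in> {1..P} \<and> k \<in> {1..K} \<and> s \<in> {1..Bb}}"

definition XI :: "nat \<times> nat \<times> nat \<times> nat \<Rightarrow> 'b \<Rightarrow> 'x" where
  "XI i \<omega> = (case i of (n, j, k, s) \<Rightarrow> xi n j k s \<omega>)"

definition yx :: "(nat \<times> nat \<times> nat \<times> nat \<Rightarrow> 'x) \<Rightarrow> nat \<Rightarrow> nat \<Rightarrow> nat \<Rightarrow> nat \<Rightarrow> unit \<Rightarrow> 'x" where
  "yx y n j k s u = y (n, j, k, s)"

definition loc :: "(nat \<times> nat \<times> nat \<times> nat \<Rightarrow> 'x) \<Rightarrow> nat \<Rightarrow> nat \<Rightarrow> 'a \<Rightarrow> nat \<Rightarrow> 'a" where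
  "loc y n j w k = kavg_local G (\<lambda>_. gbar) (\<lambda>_. Bb) (yx y) n j w k ()"

definition rnd :: "(nat \<times> nat \<times> nat \<times> nat \<Rightarrow> 'x) \<Rightarrow> nat \<Rightarrow> 'a \<Rightarrow> 'a" where
  "rnd y n w = (1 / real P) *\<^sub>R (\<Sum>j=1..P. loc y n j w K)"

definition aux :: "(nat \<times> nat \<times> nat \<times> nat \<Rightarrow> 'x) \<Rightarrow> 'a \<Rightarrow> nat \<Rightarrow> 'a" where
  "aux y w1 m = kavg_aux G (\<lambda>_. gbar) (\<lambda>_. Bb) (yx y) P K w1 m ()"

lemma loc_0[simp]: "loc y n j w 0 = w"
  by (simp add: loc_def)

lemma loc_Suc: "loc y n j w (Suc k) =
   loc y n j w k - (gbar / real Bb) *\<^sub>R (\<Sum>s=1..Bb. G (loc y n j w k) (y (n, j, Suc k, s)))"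
  by (simp add: loc_def yx_def Let_def)

lemma aux_0[simp]: "aux y w1 0 = w1"
  by (simp add: aux_def)

lemma aux_Suc: "aux y w1 (Suc m) = rnd y (Suc m) (aux y w1 m)"
  by (simp add: aux_def rnd_def loc_def)

lemma kavg_local_eq: "kavg_local G (\<lambda>_. gbar) (\<lambda>_. Bb) xi n j w k \<omega> = loc (\<lambda>i. XI i \<omega>) n j w k"
  by (induction k) (simp_all add: loc_Suc XI_def Let_def)

lemma kavg_aux_eq: "kavg_aux G (\<lambda>_. gbar) (\<lambda>_. Bb) xi P K w1 m \<omega> = aux (\<lambda>i. XI i \<omega>) w1 m"
  by (induction m) (simp_all add: aux_Suc rnd_def kavg_local_eq)

lemma loc_local:
  assumes "\<And>k' s. k' \<in> {1..k} \<Longrightarrow> s \<in> {1..Bb} \<Longrightarrow> y (n, j, k', s) = y' (n, j, k', s)"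
  shows "loc y n j w k = loc y' n j w k"
  using assms
proof (induction k)
  case 0 then show ?case by simp
next
  case (Suc k)
  have IH: "loc y n j w k = loc y' n j w k" using Suc by auto
  show ?case unfolding loc_Suc IH
    using Suc.prems by (intro arg_cong2[where f="(-)"] refl arg_cong2[where f="(*\<^sub>R)"] sum.cong) auto
qed

lemma aux_local:
  assumes "\<And>i. i \<in> Iset \<Longrightarrow> fst i \<le> m \<Longrightarrow> y i = y' i"
  shows "aux y w1 m = aux y' w1 m"
  using assms
proof (induction m)
  case 0 then show ?case by simp
next
  case (Suc m)
  have IH: "aux y w1 m = aux y' w1 m" using Suc by auto
  show ?case unfolding aux_Suc IH rnd_def
    using Suc.prems by (intro arg_cong2[where f="(*\<^sub>R)"] refl sum.cong loc_local) (auto simp: Iset_def)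
qed

lemma G_meas': "f \<in> borel_measurable N \<Longrightarrow> g \<in> measurable N D \<Longrightarrow> (\<lambda>z. G (f z) (g z)) \<in> borel_measurable N"
  using measurable_Pair_compose_split[OF G_meas] by blast

lemma loc_meas:
  assumes "\<And>k' s. k' \<in> {1..k} \<Longrightarrow> s \<in> {1..Bb} \<Longrightarrow> (\<lambda>z. Yf z (n, j, k', s)) \<in> measurable N D"
    and "W \<in> borel_measurable N"
  shows "(\<lambda>z. loc (Yf z) n j (W z) k) \<in> borel_measurable N"
  using assms(1)
proof (induction k)
  case 0 then show ?case using assms(2) by simp
next
  case (Suc k)
  have IH: "(\<lambda>z. loc (Yf z) n j (W z) k) \<in> borel_measurable N" using Suc by auto
  have "(\<lambda>z. G (loc (Yf z) n j (W z) k) (Yf z (n, j, Suc k, s))) \<in> borel_measurable N" if "s \<in> {1..Bb}" for s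
    using G_meas'[OF IH Suc.prems[of "Suc k" s]] that by auto
  then have "(\<lambda>z. \<Sum>s=1..Bb. G (loc (Yf z) n j (W z) k) (Yf z (n, j, Suc k, s))) \<in> borel_measurable N"
    by (intro borel_measurable_sum) auto
  then show ?case unfolding loc_Suc using IH by measurable
qed

end

lemma descent_lemma:
  fixes F :: "'a::real_inner \<Rightarrow> real"
  assumes deriv: "\<And>w. (F has_derivative (\<lambda>h. gradF w \<bullet> h)) (at w)"
    and lip: "\<And>w w'. norm (gradF w - gradF w') \<le> L * norm (w - w')"
  shows "F (x + d) \<le> F x + gradF x \<bullet> d + L / 2 * (norm d)\<^sup>2"
proof -
  define \<psi> where "\<psi> t = F (x + t *\<^sub>R d) - t * (gradF x \<bullet> d) - L / 2 * t\<^sup>2 * (norm d)\<^sup>2" for t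
  define \<psi>' where "\<psi>' t = gradF (x + t *\<^sub>R d) \<bullet> d - gradF x \<bullet> d - L * t * (norm d)\<^sup>2" for t
  have der: "DERIV \<psi> t :> \<psi>' t" for t
  proof -
    have 1: "((\<lambda>t. x + t *\<^sub>R d) has_derivative (\<lambda>h. h *\<^sub>R d)) (at t)"
      by (auto intro!: derivative_eq_intros)
    have 2: "((\<lambda>t. F (x + t *\<^sub>R d)) has_derivative (\<lambda>h. gradF (x + t *\<^sub>R d) \<bullet> (h *\<^sub>R d))) (at t)"
      using has_derivative_compose[OF 1 deriv] by simp
    have 3: "((\<lambda>t. F (x + t *\<^sub>R d)) has_real_derivative (gradF (x + t *\<^sub>R d) \<bullet> d)) (at t)"
      using 2 unfolding has_field_derivative_def by (simp add: mult.commute[of _ "gradF (x + t *\<^sub>R d) \<bullet> d"])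
    show ?thesis unfolding \<psi>_def \<psi>'_def
      by (auto intro!: derivative_eq_intros 3 simp: power2_eq_square algebra_simps)
  qed
  have nonpos: "\<psi>' t \<le> 0" if "0 \<le> t" for t
  proof -
    have "(gradF (x + t *\<^sub>R d) - gradF x) \<bullet> d \<le> norm (gradF (x + t *\<^sub>R d) - gradF x) * norm d"
      by (rule norm_cauchy_schwarz)
    also have "\<dots> \<le> (L * norm (t *\<^sub>R d)) * norm d"
      using lip[of "x + t *\<^sub>R d" x] by (intro mult_right_mono) auto
    also have "\<dots> = L * t * (norm d)\<^sup>2" using that by (simp add: power2_eq_square)
    finally show ?thesis unfolding \<psi>'_def by (simp add: inner_diff_left)
  qed
  obtain z where z: "0 < z" "z < 1" "\<psi> 1 - \<psi> 0 = (1 - 0) * \<psi>' z"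
    using MVT2[of 0 1 \<psi> \<psi>'] der by auto
  then have "\<psi> 1 \<le> \<psi> 0" using nonpos[of z] by simp
  then show ?thesis unfolding \<psi>_def by simp
qed

lemma norm_sum_sq_le:
  fixes a :: "'i \<Rightarrow> 'a::real_normed_vector"
  shows "(norm (\<Sum>i\<in>S. a i))\<^sup>2 \<le> real (card S) * (\<Sum>i\<in>S. (norm (a i))\<^sup>2)"
proof -
  have "(norm (\<Sum>i\<in>S. a i))\<^sup>2 \<le> (\<Sum>i\<in>S. norm (a i))\<^sup>2"
    by (intro power_mono norm_sum) auto
  also have "\<dots> \<le> (\<Sum>i\<in>S. (norm (a i))\<^sup>2) * card S"
    by (rule sum_squared_le_sum_of_squares)
  finally show ?thesis by (simp add: mult.commute)
qed

lemma norm_avg_sq_le: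
  fixes a :: "'i \<Rightarrow> 'a::real_normed_vector"
  assumes "finite S" "S \<noteq> {}"
  shows "(norm ((1 / real (card S)) *\<^sub>R (\<Sum>i\<in>S. a i)))\<^sup>2 \<le> (1 / real (card S)) * (\<Sum>i\<in>S. (norm (a i))\<^sup>2)"
proof -
  have c: "real (card S) > 0" using assms by auto
  have "(norm ((1 / real (card S)) *\<^sub>R (\<Sum>i\<in>S. a i)))\<^sup>2 = (norm (\<Sum>i\<in>S. a i))\<^sup>2 / (real (card S))\<^sup>2"
    using c by (simp add: power_divide)
  also have "\<dots> \<le> real (card S) * (\<Sum>i\<in>S. (norm (a i))\<^sup>2) / (real (card S))\<^sup>2"
    by (intro divide_right_mono norm_sum_sq_le) auto
  also have "\<dots> = (1 / real (card S)) * (\<Sum>i\<in>S. (norm (a i))\<^sup>2)"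
    using c by (simp add: power2_eq_square)
  finally show ?thesis .
qed

lemma (in prob_space) indep_split:
  assumes ind: "indep_var S X T Y"
    and f: "f \<in> borel_measurable (S \<Otimes>\<^sub>M T)"
  shows "(\<integral>\<^sup>+\<omega>. f (X \<omega>, Y \<omega>) \<partial>M) = (\<integral>\<^sup>+\<omega>. (\<integral>\<^sup>+\<omega>'. f (X \<omega>, Y \<omega>') \<partial>M) \<partial>M)"
proof -
  from ind[unfolded indep_var_distribution_eq]
  have X: "X \<in> measurable M S" and Y: "Y \<in> measurable M T"
    and eq: "distr M S X \<Otimes>\<^sub>M distr M T Y = distr M (S \<Otimes>\<^sub>M T) (\<lambda>x. (X x, Y x))" by auto
  interpret PX: prob_space "distr M S X" by (rule prob_space_distr[OF X])
  interpret PY: prob_space "distr M T Y" by (rule prob_space_distr[OF Y])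
  have f': "f \<in> borel_measurable (distr M S X \<Otimes>\<^sub>M distr M T Y)"
    using f by (simp add: measurable_cong_sets[OF sets_pair_measure_cong[OF sets_distr sets_distr] refl])
  have "(\<integral>\<^sup>+\<omega>. f (X \<omega>, Y \<omega>) \<partial>M) = (\<integral>\<^sup>+z. f z \<partial>distr M (S \<Otimes>\<^sub>M T) (\<lambda>x. (X x, Y x)))"
    using X Y f by (subst nn_integral_distr) (auto intro: measurable_Pair)
  also have "\<dots> = (\<integral>\<^sup>+z. f z \<partial>(distr M S X \<Otimes>\<^sub>M distr M T Y))"
    by (simp add: eq)
  also have "\<dots> = (\<integral>\<^sup>+a. (\<integral>\<^sup>+b. f (a, b) \<partial>distr M T Y) \<partial>distr M S X)"
    by (rule PY.nn_integral_fst[OF f', symmetric])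
  also have "\<dots> = (\<integral>\<^sup>+\<omega>. (\<integral>\<^sup>+b. f (X \<omega>, b) \<partial>distr M T Y) \<partial>M)"
    using PY.borel_measurable_nn_integral_fst[OF f'] X
    by (subst nn_integral_distr) (auto simp: measurable_cong_sets[OF sets_distr refl])
  also have "\<dots> = (\<integral>\<^sup>+\<omega>. (\<integral>\<^sup>+\<omega>'. f (X \<omega>, Y \<omega>') \<partial>M) \<partial>M)"
  proof (intro nn_integral_cong)
    fix \<omega> assume "\<omega> \<in> space M"
    then have xs: "X \<omega> \<in> space S" using X by (auto simp: measurable_space)
    have "(\<lambda>b. f (X \<omega>, b)) \<in> borel_measurable T"
      by (rule measurable_Pair2[OF f xs])
    then show "(\<integral>\<^sup>+b. f (X \<omega>, b) \<partial>distr M T Y) = (\<integral>\<^sup>+\<omega>'. f (X \<omega>, Y \<omega>') \<partial>M)"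
      using Y by (subst nn_integral_distr) auto
  qed
  finally show ?thesis .
qed

lemma (in prob_space) indep_split_AE:
  assumes ind: "indep_var S X T Y"
    and Qm: "{z \<in> space (S \<Otimes>\<^sub>M T). Q z} \<in> sets (S \<Otimes>\<^sub>M T)"
    and all: "\<And>\<omega>. \<omega> \<in> space M \<Longrightarrow> Q (X \<omega>, Y \<omega>)"
  shows "AE \<omega> in M. AE \<omega>' in M. Q (X \<omega>, Y \<omega>')"
proof -
  from ind[unfolded indep_var_distribution_eq]
  have X: "X \<in> measurable M S" and Y: "Y \<in> measurable M T"
    and eq: "distr M S X \<Otimes>\<^sub>M distr M T Y = distr M (S \<Otimes>\<^sub>M T) (\<lambda>x. (X x, Y x))" by auto
  interpret PX: prob_space "distr M S X" by (rule prob_space_distr[OF X])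
  interpret PY: prob_space "distr M T Y" by (rule prob_space_distr[OF Y])
  interpret PXY: pair_prob_space "distr M S X" "distr M T Y" ..
  have XY: "(\<lambda>x. (X x, Y x)) \<in> measurable M (S \<Otimes>\<^sub>M T)" using X Y by (rule measurable_Pair)
  have "AE z in distr M (S \<Otimes>\<^sub>M T) (\<lambda>x. (X x, Y x)). Q z"
    using all by (subst AE_distr_iff[OF XY Qm]) (auto intro: AE_I2)
  then have "AE z in distr M S X \<Otimes>\<^sub>M distr M T Y. Q z" unfolding eq .
  then have "AE a in distr M S X. AE b in distr M T Y. Q (a, b)" by (rule PXY.AE_pair)
  then have "AE \<omega> in M. AE b in distr M T Y. Q (X \<omega>, b)" by (rule AE_distrD[OF X])
  then show ?thesis
    by (rule eventually_mono) (rule AE_distrD[OF Y])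
qed

lemma one_sample:
  fixes c :: "'x \<Rightarrow> 'a::euclidean_space"
  assumes "prob_space D" and ci: "integrable D c" and csq: "integrable D (\<lambda>y. (norm (c y))\<^sup>2)"
    and c0: "(\<integral>y. c y \<partial>D) = 0"
  shows "(\<integral>\<^sup>+y. ennreal ((norm (b + \<alpha> *\<^sub>R c y))\<^sup>2) \<partial>D) = ennreal ((norm b)\<^sup>2 + \<alpha>\<^sup>2 * (\<integral>y. (norm (c y))\<^sup>2 \<partial>D))"
proof -
  interpret prob_space D by fact
  have eq: "(norm (b + \<alpha> *\<^sub>R c y))\<^sup>2 = (norm b)\<^sup>2 + (2 * \<alpha>) * (b \<bullet> c y) + \<alpha>\<^sup>2 * (norm (c y))\<^sup>2" for y
    unfolding power2_norm_eq_inner by (simp add: inner_add_left inner_add_right inner_commute algebra_simps power2_eq_square)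
  have int: "integrable D (\<lambda>y. (norm b)\<^sup>2 + (2 * \<alpha>) * (b \<bullet> c y) + \<alpha>\<^sup>2 * (norm (c y))\<^sup>2)"
    by (intro Bochner_Integration.integrable_add integrable_mult_right integrable_inner_right ci csq finite_measure.integrable_const finite_measure_axioms)
  have "(\<integral>\<^sup>+y. ennreal ((norm (b + \<alpha> *\<^sub>R c y))\<^sup>2) \<partial>D)
      = (\<integral>\<^sup>+y. ennreal ((norm b)\<^sup>2 + (2 * \<alpha>) * (b \<bullet> c y) + \<alpha>\<^sup>2 * (norm (c y))\<^sup>2) \<partial>D)"
    by (simp add: eq)
  also have "\<dots> = ennreal (\<integral>y. (norm b)\<^sup>2 + (2 * \<alpha>) * (b \<bullet> c y) + \<alpha>\<^sup>2 * (norm (c y))\<^sup>2 \<partial>D)"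
    using int by (intro nn_integral_eq_integral) (auto simp: eq[symmetric])
  also have "(\<integral>y. (norm b)\<^sup>2 + (2 * \<alpha>) * (b \<bullet> c y) + \<alpha>\<^sup>2 * (norm (c y))\<^sup>2 \<partial>D)
      = (norm b)\<^sup>2 + (2 * \<alpha>) * (b \<bullet> (\<integral>y. c y \<partial>D)) + \<alpha>\<^sup>2 * (\<integral>y. (norm (c y))\<^sup>2 \<partial>D)"
  proof -
    have i1: "integrable D (\<lambda>y. (2 * \<alpha>) * (b \<bullet> c y))" "integrable D (\<lambda>y. \<alpha>\<^sup>2 * (norm (c y))\<^sup>2)"
      "integrable D (\<lambda>y. (norm b)\<^sup>2)"
      by (intro integrable_mult_right integrable_inner_right ci csq finite_measure.integrable_const finite_measure_axioms)+
    have i2: "integrable D (\<lambda>y. (norm b)\<^sup>2 + (2 * \<alpha>) * (b \<bullet> c y))"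
      by (intro Bochner_Integration.integrable_add i1)
    show ?thesis
      using i1 i2 ci by (simp add: Bochner_Integration.integral_add prob_space)
  qed
  finally show ?thesis using c0 by simp
qed

context kavg begin

lemma XI_simp[simp]: "XI (n, j, k, s) = xi n j k s"
  by (simp add: fun_eq_iff XI_def)

lemma XI_meas: "i \<in> Iset \<Longrightarrow> XI i \<in> measurable MO D"
  using xi_meas by (auto simp: Iset_def)

lemma XI_indep: "prob_space.indep_vars MO (\<lambda>_. D) XI Iset"
proof -
  have "(\<lambda>(n, j, k, s). xi n j k s) = XI" by (auto simp: XI_def fun_eq_iff split: prod.splits)
  then show ?thesis using xi_indep by (simp add: Iset_def)
qed

lemma XI_distr: "i \<in> Iset \<Longrightarrow> distr MO D (XI i) = D"
  using xi_distr by (auto simp: Iset_def)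

lemma nn_integral_MO_const: "(\<integral>\<^sup>+\<omega>. c \<partial>MO) = c"
  using prob by (simp add: prob_space.emeasure_space_1)

lemma sum_indep:
  fixes c :: "'i \<Rightarrow> 'x \<Rightarrow> 'a"
  assumes T: "finite T"
    and inj: "inj_on \<iota> T" and sub: "\<iota> ` T \<subseteq> Iset"
    and ci: "\<And>p. p \<in> T \<Longrightarrow> integrable D (c p)"
    and csq: "\<And>p. p \<in> T \<Longrightarrow> integrable D (\<lambda>y. (norm (c p y))\<^sup>2)"
    and c0: "\<And>p. p \<in> T \<Longrightarrow> (\<integral>y. c p y \<partial>D) = 0"
    and cV: "\<And>p. p \<in> T \<Longrightarrow> (\<integral>y. (norm (c p y))\<^sup>2 \<partial>D) \<le> V"
  shows "(\<integral>\<^sup>+\<omega>. ennreal ((norm (b + \<alpha> *\<^sub>R (\<Sum>p\<in>T. c p (XI (\<iota> p) \<omega>))))\<^sup>2) \<partial>MO)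
          \<le> ennreal ((norm b)\<^sup>2 + \<alpha>\<^sup>2 * (real (card T) * V))"
  using T inj sub ci csq c0 cV
proof (induction T rule: finite_induct)
  case empty
  then show ?case by (simp add: prob_space.emeasure_space_1[OF prob])
next
  case (insert p T)
  let ?X = "\<lambda>\<omega>. restrict (\<lambda>i. XI i \<omega>) (\<iota> ` T)"
  let ?Y = "\<lambda>\<omega>. restrict (\<lambda>i. XI i \<omega>) {\<iota> p}"
  let ?R = "PiM {\<iota> p} (\<lambda>_. D)"
  let ?S = "PiM (\<iota> ` T) (\<lambda>_. D)"
  have pI: "\<iota> p \<in> Iset" using insert by auto
  have V0: "0 \<le> V"
  proof -
    have "0 \<le> (\<integral>y. (norm (c p y))\<^sup>2 \<partial>D)" by (rule integral_nonneg_AE) auto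
    also have "\<dots> \<le> V" by (rule insert.prems(6)) simp
    finally show ?thesis .
  qed
  have pT: "\<iota> p \<notin> \<iota> ` T" using insert by auto
  have ind: "prob_space.indep_var MO ?S ?X ?R ?Y"
    using prob_space.indep_var_restrict[OF prob XI_indep, of "\<iota> ` T" "{\<iota> p}"] pT insert.prems by auto
  have cm: "\<And>q. q \<in> insert p T \<Longrightarrow> c q \<in> borel_measurable D"
    using insert.prems by (auto intro: borel_measurable_integrable)
  define f where "f z = ennreal ((norm (b + \<alpha> *\<^sub>R ((\<Sum>q\<in>T. c q (fst z (\<iota> q))) + c p (snd z (\<iota> p)))))\<^sup>2)" for z
  have fm: "f \<in> borel_measurable (?S \<Otimes>\<^sub>M ?R)"
  proof -
    have "(\<lambda>z. c q (fst z (\<iota> q))) \<in> borel_measurable (?S \<Otimes>\<^sub>M ?R)" if "q \<in> T" for q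
      using that cm by (intro measurable_compose[OF _ cm[of q]]) auto
    then have "(\<lambda>z. \<Sum>q\<in>T. c q (fst z (\<iota> q))) \<in> borel_measurable (?S \<Otimes>\<^sub>M ?R)"
      by (intro borel_measurable_sum) auto
    moreover have "(\<lambda>z. c p (snd z (\<iota> p))) \<in> borel_measurable (?S \<Otimes>\<^sub>M ?R)"
      by (intro measurable_compose[OF _ cm[of p]]) auto
    ultimately show ?thesis unfolding f_def by measurable
  qed
  have eqf: "ennreal ((norm (b + \<alpha> *\<^sub>R (\<Sum>q\<in>insert p T. c q (XI (\<iota> q) \<omega>))))\<^sup>2) = f (?X \<omega>, ?Y \<omega>)" for \<omega>
    unfolding f_def using insert.hyps by (simp add: add.commute)
  have "(\<integral>\<^sup>+\<omega>. ennreal ((norm (b + \<alpha> *\<^sub>R (\<Sum>q\<in>insert p T. c q (XI (\<iota> q) \<omega>))))\<^sup>2) \<partial>MO)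
      = (\<integral>\<^sup>+\<omega>. f (?X \<omega>, ?Y \<omega>) \<partial>MO)" by (simp add: eqf)
  also have "\<dots> = (\<integral>\<^sup>+\<omega>. (\<integral>\<^sup>+\<omega>'. f (?X \<omega>, ?Y \<omega>') \<partial>MO) \<partial>MO)"
    by (rule prob_space.indep_split[OF prob ind fm])
  also have "\<dots> \<le> (\<integral>\<^sup>+\<omega>. ennreal ((norm (b + \<alpha> *\<^sub>R (\<Sum>q\<in>T. c q (XI (\<iota> q) \<omega>))))\<^sup>2) + ennreal (\<alpha>\<^sup>2 * V) \<partial>MO)"
  proof (intro nn_integral_mono)
    fix \<omega> assume "\<omega> \<in> space MO"
    define b' where "b' = b + \<alpha> *\<^sub>R (\<Sum>q\<in>T. c q (XI (\<iota> q) \<omega>))"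
    have fe: "f (?X \<omega>, ?Y \<omega>') = ennreal ((norm (b' + \<alpha> *\<^sub>R c p (XI (\<iota> p) \<omega>')))\<^sup>2)" for \<omega>'
      unfolding f_def b'_def by (simp add: algebra_simps)
    have "(\<integral>\<^sup>+\<omega>'. f (?X \<omega>, ?Y \<omega>') \<partial>MO) = (\<integral>\<^sup>+y. ennreal ((norm (b' + \<alpha> *\<^sub>R c p y))\<^sup>2) \<partial>distr MO D (XI (\<iota> p)))"
      using XI_meas[OF pI] cm[of p] by (subst nn_integral_distr) (auto simp: fe)
    also have "\<dots> = (\<integral>\<^sup>+y. ennreal ((norm (b' + \<alpha> *\<^sub>R c p y))\<^sup>2) \<partial>D)"
      by (simp add: XI_distr[OF pI])
    also have "\<dots> = ennreal ((norm b')\<^sup>2 + \<alpha>\<^sup>2 * (\<integral>y. (norm (c p y))\<^sup>2 \<partial>D))"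
      by (rule one_sample[OF D_prob]) (use insert.prems in auto)
    also have "\<dots> \<le> ennreal ((norm b')\<^sup>2 + \<alpha>\<^sup>2 * V)"
      using insert.prems by (intro ennreal_leI add_left_mono mult_left_mono) auto
    also have "\<dots> = ennreal ((norm b')\<^sup>2) + ennreal (\<alpha>\<^sup>2 * V)"
      using V0 by (intro ennreal_plus) auto
    finally show "(\<integral>\<^sup>+\<omega>'. f (?X \<omega>, ?Y \<omega>') \<partial>MO) \<le> ennreal ((norm (b + \<alpha> *\<^sub>R (\<Sum>q\<in>T. c q (XI (\<iota> q) \<omega>))))\<^sup>2) + ennreal (\<alpha>\<^sup>2 * V)"
      unfolding b'_def .
  qed
  also have "\<dots> = (\<integral>\<^sup>+\<omega>. ennreal ((norm (b + \<alpha> *\<^sub>R (\<Sum>q\<in>T. c q (XI (\<iota> q) \<omega>))))\<^sup>2) \<partial>MO) + ennreal (\<alpha>\<^sup>2 * V)"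
  proof -
    have "(\<lambda>\<omega>. \<Sum>q\<in>T. c q (XI (\<iota> q) \<omega>)) \<in> borel_measurable MO"
      using insert.prems cm by (intro borel_measurable_sum measurable_compose[OF XI_meas]) auto
    then show ?thesis
      by (subst nn_integral_add) (auto simp: prob_space.emeasure_space_1[OF prob])
  qed
  also have "\<dots> \<le> ennreal ((norm b)\<^sup>2 + \<alpha>\<^sup>2 * (real (card T) * V)) + ennreal (\<alpha>\<^sup>2 * V)"
    using insert by (intro add_right_mono insert.IH) auto
  also have "\<dots> = ennreal ((norm b)\<^sup>2 + \<alpha>\<^sup>2 * (real (card (insert p T)) * V))"
    using V0 insert.hyps by (subst ennreal_plus[symmetric]) (auto simp: algebra_simps)
  finally show ?case .
qed

end

locale kavg2 = kavg +
  fixes \<delta> :: real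
  assumes delta: "0 < \<delta>" "\<delta> < 1"
    and cond1: "1 \<ge> L\<^sup>2 * gbar\<^sup>2 * (real K + 1) * (real K - 2) / 2 + L * gbar * real K"
    and cond2: "1 - \<delta> \<ge> L\<^sup>2 * gbar\<^sup>2"
begin

definition gb where
  "gb y n x j t = (1 / real Bb) *\<^sub>R (\<Sum>s=1..Bb. G (loc y n j x t) (y (n, j, Suc t, s)))"
definition uu where
  "uu y n x t = (1 / real P) *\<^sub>R (\<Sum>j=1..P. gb y n x j t)"
definition Qf where
  "Qf y n x t = L * gbar\<^sup>2 * real K / 2 * (norm (uu y n x t - (1 / (L * gbar * real K)) *\<^sub>R gradF x))\<^sup>2"
definition Yv where
  "Yv y n x j t = (norm (gb y n x j t))\<^sup>2"
definition Bs where
  "Bs y n x j t = (\<Sum>i<t. Yv y n x j i)"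
definition beta where
  "beta t = gbar * (L * gbar)\<^sup>2 / 4 * (real K * (real K - 1) - real t * (real t - 1))"
definition Psi where
  "Psi y n x t = (\<Sum>i<t. Qf y n x i) + (1 / real P) * (\<Sum>j=1..P. beta t * Bs y n x j t)"

lemma Bb_real: "real Bb > 0" using Bb_pos by auto
lemma P_real: "real P > 0" using P_pos by auto
lemma K_real: "real K \<ge> 1" using K_pos by auto

lemma loc_Suc': "loc y n j x (Suc t) = loc y n j x t - gbar *\<^sub>R gb y n x j t"
  unfolding loc_Suc gb_def by simp

lemma loc_sum: "loc y n j x t = x - gbar *\<^sub>R (\<Sum>i<t. gb y n x j i)"
  by (induction t) (simp_all add: loc_Suc' algebra_simps scaleR_add_right)

lemma rnd_eq: "rnd y n x = x - gbar *\<^sub>R (\<Sum>t<K. uu y n x t)"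
proof -
  have "rnd y n x = (1 / real P) *\<^sub>R (\<Sum>j=1..P. x - gbar *\<^sub>R (\<Sum>i<K. gb y n x j i))"
    unfolding rnd_def by (simp add: loc_sum)
  also have "\<dots> = (1 / real P) *\<^sub>R (real P *\<^sub>R x - gbar *\<^sub>R (\<Sum>i<K. \<Sum>j=1..P. gb y n x j i))"
    using sum.swap[of "\<lambda>j i. gb y n x j i" "{..<K}" "{1..P}"]
    by (simp add: sum_subtractf scaleR_sum_right[symmetric] sum_constant_scaleR)
  also have "\<dots> = x - gbar *\<^sub>R (\<Sum>t<K. uu y n x t)"
    using P_real by (simp add: uu_def scaleR_sum_right algebra_simps)
  finally show ?thesis .
qed

lemma beta_K: "beta K = 0"
  by (simp add: beta_def)

lemma beta_nonneg: "t \<le> K \<Longrightarrow> beta t \<ge> 0"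
proof -
  assume tK: "t \<le> K"
  have "real t * (real t - 1) \<le> real K * (real K - 1)"
  proof (cases "t = 0")
    case True then show ?thesis using K_real by simp
  next
    case False then show ?thesis using tK by (intro mult_mono) auto
  qed
  then show ?thesis using gbar_pos by (simp add: beta_def)
qed

lemma beta_step: "beta t = beta (Suc t) + gbar / 2 * (L * gbar)\<^sup>2 * real t"
proof -
  have "real K * (real K - 1) - real t * (real t - 1) = (real K * (real K - 1) - real (Suc t) * (real (Suc t) - 1)) + 2 * real t"
    by (simp add: algebra_simps)
  then have "beta t = gbar * (L * gbar)\<^sup>2 / 4 * ((real K * (real K - 1) - real (Suc t) * (real (Suc t) - 1)) + 2 * real t)"
    unfolding beta_def by simp
  also have "\<dots> = beta (Suc t) + gbar / 2 * (L * gbar)\<^sup>2 * real t"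
    unfolding beta_def by (simp add: distrib_left)
  finally show ?thesis .
qed

lemma pathwise:
  "F (rnd y n x) + (norm (gradF x))\<^sup>2 / (2 * L) \<le> F x + (\<Sum>t<K. Qf y n x t)"
proof -
  define g where "g = gradF x"
  define d where "d = - gbar *\<^sub>R (\<Sum>t<K. uu y n x t)"
  have r: "rnd y n x = x + d" unfolding d_def rnd_eq by simp
  have "F (x + d) \<le> F x + g \<bullet> d + L / 2 * (norm d)\<^sup>2"
    unfolding g_def by (rule descent_lemma[OF deriv lipschitz])
  also have "(norm d)\<^sup>2 \<le> gbar\<^sup>2 * (real K * (\<Sum>t<K. (norm (uu y n x t))\<^sup>2))"
  proof -
    have "(norm d)\<^sup>2 = gbar\<^sup>2 * (norm (\<Sum>t<K. uu y n x t))\<^sup>2"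
      unfolding d_def using gbar_pos by (simp add: power_mult_distrib)
    also have "\<dots> \<le> gbar\<^sup>2 * (real (card {..<K}) * (\<Sum>t<K. (norm (uu y n x t))\<^sup>2))"
      by (intro mult_left_mono norm_sum_sq_le) auto
    finally show ?thesis by simp
  qed
  then have "F x + g \<bullet> d + L / 2 * (norm d)\<^sup>2 \<le> F x + g \<bullet> d + L / 2 * (gbar\<^sup>2 * (real K * (\<Sum>t<K. (norm (uu y n x t))\<^sup>2)))"
    using L_pos by simp
  also have "\<dots> = F x + (\<Sum>t<K. Qf y n x t) - (norm g)\<^sup>2 / (2 * L)"
  proof -
    have q: "Qf y n x t = L * gbar\<^sup>2 * real K / 2 * (norm (uu y n x t))\<^sup>2 - gbar * (g \<bullet> uu y n x t)
               + (norm g)\<^sup>2 / (2 * L * real K)" for t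
    proof -
      have "(norm (uu y n x t - (1 / (L * gbar * real K)) *\<^sub>R g))\<^sup>2
          = (norm (uu y n x t))\<^sup>2 - 2 * (1 / (L * gbar * real K)) * (g \<bullet> uu y n x t) + (1 / (L * gbar * real K))\<^sup>2 * (norm g)\<^sup>2"
        unfolding power2_norm_eq_inner by (simp add: inner_diff_left inner_diff_right inner_commute power2_eq_square algebra_simps)
      then show ?thesis unfolding Qf_def g_def[symmetric] using L_pos gbar_pos K_real
        by (simp add: field_simps power2_eq_square)
    qed
    have gd: "g \<bullet> d = - gbar * (\<Sum>t<K. g \<bullet> uu y n x t)"
      unfolding d_def by (simp add: inner_sum_right)
    have c: "(\<Sum>t<K. (norm g)\<^sup>2 / (2 * L * real K)) = (norm g)\<^sup>2 / (2 * L)"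
    proof -
      have "K \<noteq> 0" using K_pos by linarith
      then show ?thesis using L_pos by simp
    qed
    have sQ: "(\<Sum>t<K. Qf y n x t) = L * gbar\<^sup>2 * real K / 2 * (\<Sum>t<K. (norm (uu y n x t))\<^sup>2)
         - gbar * (\<Sum>t<K. g \<bullet> uu y n x t) + (norm g)\<^sup>2 / (2 * L)"
    proof -
      have "(\<Sum>t<K. Qf y n x t) = (\<Sum>t<K. L * gbar\<^sup>2 * real K / 2 * (norm (uu y n x t))\<^sup>2)
         - (\<Sum>t<K. gbar * (g \<bullet> uu y n x t)) + (\<Sum>t<K. (norm g)\<^sup>2 / (2 * L * real K))"
        by (simp only: q sum.distrib sum_subtractf)
      then show ?thesis unfolding c by (simp add: sum_distrib_left)
    qed
    show ?thesis unfolding gd sQ by (simp add: algebra_simps)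
  qed
  finally show ?thesis unfolding r g_def by simp
qed

lemma dist_bound:
  "(norm (gradF x - gradF (loc y n j x t)))\<^sup>2 \<le> L\<^sup>2 * gbar\<^sup>2 * real t * Bs y n x j t"
proof -
  have "norm (gradF x - gradF (loc y n j x t)) \<le> L * norm (x - loc y n j x t)"
    by (rule lipschitz)
  also have "\<dots> = L * gbar * norm (\<Sum>i<t. gb y n x j i)"
    using L_pos gbar_pos by (simp add: loc_sum)
  finally have "(norm (gradF x - gradF (loc y n j x t)))\<^sup>2 \<le> (L * gbar * norm (\<Sum>i<t. gb y n x j i))\<^sup>2"
    by (intro power_mono) auto
  also have "\<dots> = L\<^sup>2 * gbar\<^sup>2 * (norm (\<Sum>i<t. gb y n x j i))\<^sup>2"
    by (simp add: power_mult_distrib)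
  also have "\<dots> \<le> L\<^sup>2 * gbar\<^sup>2 * (real (card {..<t}) * (\<Sum>i<t. (norm (gb y n x j i))\<^sup>2))"
    by (intro mult_left_mono norm_sum_sq_le) auto
  finally show ?thesis by (simp add: Bs_def Yv_def)
qed

definition et where
  "et x t = (1 - L * gbar * real K) / (2 * L * real K) * (norm (gradF x))\<^sup>2
     + (if t = 0 then gbar * (L * gbar)\<^sup>2 / 2 * (norm (gradF x))\<^sup>2 else 0)"

lemma qK_le1: "L * gbar * real K \<le> 1"
proof (cases "K \<ge> 2")
  case True
  then have "(real K + 1) * (real K - 2) \<ge> 0" by auto
  then have "L\<^sup>2 * gbar\<^sup>2 * (real K + 1) * (real K - 2) / 2 \<ge> 0"
    by (simp add: mult.assoc)
  then show ?thesis using cond1 by linarith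
next
  case False
  then have K1: "K = 1" using K_pos by auto
  have "(L * gbar)\<^sup>2 < 1\<^sup>2" using cond2 delta by (simp add: power_mult_distrib)
  then have "L * gbar < 1" using L_pos gbar_pos by (smt (verit) power_mono)
  then show ?thesis using K1 by simp
qed

lemma kappa_bound:
  assumes "t < K"
  shows "L * gbar\<^sup>2 * real K / 2 - gbar / 2 + beta (Suc t)
     \<le> (if t = 0 then gbar * (L * gbar)\<^sup>2 / 2 else 0)"
proof -
  define q where "q = L * gbar"
  have q2: "q\<^sup>2 \<ge> 0" by simp
  have c1: "q\<^sup>2 * (real K * (real K - 1)) / 2 - q\<^sup>2 + q * real K \<le> 1"
  proof -
    have "(real K + 1) * (real K - 2) = real K * (real K - 1) - 2" by (simp add: algebra_simps)
    moreover have "L\<^sup>2 * gbar\<^sup>2 * (real K + 1) * (real K - 2) / 2 = q\<^sup>2 * ((real K + 1) * (real K - 2)) / 2"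
      unfolding q_def by (simp add: power_mult_distrib mult.assoc)
    moreover have "q\<^sup>2 * ((real K + 1) * (real K - 2)) / 2 = q\<^sup>2 * (real K * (real K - 1)) / 2 - q\<^sup>2"
      by (subst calculation(1)) (simp add: right_diff_distrib diff_divide_distrib)
    ultimately have "L\<^sup>2 * gbar\<^sup>2 * (real K + 1) * (real K - 2) / 2 = q\<^sup>2 * (real K * (real K - 1)) / 2 - q\<^sup>2"
      by linarith
    then show ?thesis using cond1 unfolding q_def by linarith
  qed
  have kap: "L * gbar\<^sup>2 * real K / 2 - gbar / 2 + beta (Suc t)
      = gbar / 2 * (q * real K - 1 + q\<^sup>2 * (real K * (real K - 1)) / 2 - q\<^sup>2 * (real (Suc t) * real t) / 2)"
    unfolding beta_def q_def by (simp add: field_simps power2_eq_square)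
  show ?thesis
  proof (cases "t = 0")
    case True
    then have "L * gbar\<^sup>2 * real K / 2 - gbar / 2 + beta (Suc t)
      = gbar / 2 * (q * real K - 1 + q\<^sup>2 * (real K * (real K - 1)) / 2)" unfolding kap by simp
    also have "\<dots> \<le> gbar / 2 * q\<^sup>2"
      using c1 gbar_pos by (intro mult_left_mono) auto
    finally show ?thesis using True unfolding q_def by simp
  next
    case False
    then have "real (Suc t) * real t \<ge> 2"
    proof -
      have "Suc t * t \<ge> 2 * 1" using False by (intro mult_mono) auto
      then show ?thesis by (metis of_nat_mult of_nat_le_iff of_nat_numeral mult_1_right)
    qed
    then have "q\<^sup>2 * (real (Suc t) * real t) \<ge> q\<^sup>2 * 2" by (intro mult_left_mono) auto
    then have "q * real K - 1 + q\<^sup>2 * (real K * (real K - 1)) / 2 - q\<^sup>2 * (real (Suc t) * real t) / 2 \<le> 0"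
      using c1 by linarith
    then have "gbar / 2 * (q * real K - 1 + q\<^sup>2 * (real K * (real K - 1)) / 2 - q\<^sup>2 * (real (Suc t) * real t) / 2) \<le> 0"
      using gbar_pos by (simp add: mult_nonneg_nonpos)
    then show ?thesis using False unfolding kap by simp
  qed
qed

lemma step_det:
  assumes tK: "t < K"
  shows "L * gbar\<^sup>2 * real K / 2 * (norm ((1 / real P) *\<^sub>R (\<Sum>j=1..P. gradF (loc y n j x t)) - (1 / (L * gbar * real K)) *\<^sub>R gradF x))\<^sup>2
     + (1 / real P) * (\<Sum>j=1..P. beta (Suc t) * (Bs y n x j t + (norm (gradF (loc y n j x t)))\<^sup>2))
     \<le> (1 / real P) * (\<Sum>j=1..P. beta t * Bs y n x j t) + et x t"
proof -
  define g where "g = gradF x"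
  define h where "h j = gradF (loc y n j x t)" for j
  define c1 where "c1 = L * gbar\<^sup>2 * real K / 2"
  define hh where "hh = (1 / real P) *\<^sub>R (\<Sum>j=1..P. h j)"
  define E0 where "E0 = (if t = 0 then gbar * (L * gbar)\<^sup>2 / 2 * (norm g)\<^sup>2 else 0)"
  have E1: "c1 * (norm (hh - (1 / (L * gbar * real K)) *\<^sub>R g))\<^sup>2
      = c1 * (norm hh)\<^sup>2 - gbar * (g \<bullet> hh) + (norm g)\<^sup>2 / (2 * L * real K)"
  proof -
    have "(norm (hh - (1 / (L * gbar * real K)) *\<^sub>R g))\<^sup>2
        = (norm hh)\<^sup>2 - 2 * (1 / (L * gbar * real K)) * (g \<bullet> hh) + (1 / (L * gbar * real K))\<^sup>2 * (norm g)\<^sup>2"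
      unfolding power2_norm_eq_inner by (simp add: inner_diff_left inner_diff_right inner_commute power2_eq_square algebra_simps)
    then show ?thesis unfolding c1_def using L_pos gbar_pos K_real
      by (simp add: field_simps power2_eq_square)
  qed
  have E2: "(norm hh)\<^sup>2 \<le> (1 / real P) * (\<Sum>j=1..P. (norm (h j))\<^sup>2)"
    unfolding hh_def using norm_avg_sq_le[of "{1..P}" h] P_pos by simp
  have E3: "g \<bullet> hh = (1 / real P) * (\<Sum>j=1..P. g \<bullet> h j)"
    unfolding hh_def by (simp add: inner_sum_right)
  have Tj: "c1 * (norm (h j))\<^sup>2 - gbar * (g \<bullet> h j) + beta (Suc t) * (Bs y n x j t + (norm (h j))\<^sup>2)
      \<le> beta t * Bs y n x j t - gbar / 2 * (norm g)\<^sup>2 + E0" for j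
  proof -
    have pol: "- gbar * (g \<bullet> h j) = gbar / 2 * ((norm (g - h j))\<^sup>2 - (norm g)\<^sup>2 - (norm (h j))\<^sup>2)"
      unfolding power2_norm_eq_inner by (simp add: inner_diff_left inner_diff_right inner_commute algebra_simps)
    have db: "(norm (g - h j))\<^sup>2 \<le> L\<^sup>2 * gbar\<^sup>2 * real t * Bs y n x j t"
      unfolding g_def h_def by (rule dist_bound)
    have kap: "(c1 - gbar / 2 + beta (Suc t)) * (norm (h j))\<^sup>2 \<le> E0"
    proof (cases "t = 0")
      case True
      then have "h j = g" unfolding h_def g_def by simp
      moreover have "c1 - gbar / 2 + beta (Suc t) \<le> gbar * (L * gbar)\<^sup>2 / 2"
        using kappa_bound[OF tK] True unfolding c1_def by simp
      then have "(c1 - gbar / 2 + beta (Suc t)) * (norm g)\<^sup>2 \<le> gbar * (L * gbar)\<^sup>2 / 2 * (norm g)\<^sup>2"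
        by (intro mult_right_mono) auto
      ultimately show ?thesis unfolding E0_def using True by simp
    next
      case False
      then have "c1 - gbar / 2 + beta (Suc t) \<le> 0"
        using kappa_bound[OF tK] unfolding c1_def by simp
      then show ?thesis unfolding E0_def using False by (simp add: mult_nonpos_nonneg)
    qed
    have bs: "beta t = beta (Suc t) + gbar / 2 * L\<^sup>2 * gbar\<^sup>2 * real t"
      using beta_step[of t] by (simp add: power_mult_distrib)
    have "c1 * (norm (h j))\<^sup>2 - gbar * (g \<bullet> h j) + beta (Suc t) * (Bs y n x j t + (norm (h j))\<^sup>2)
        = (c1 - gbar / 2 + beta (Suc t)) * (norm (h j))\<^sup>2 + gbar / 2 * (norm (g - h j))\<^sup>2
          + beta (Suc t) * Bs y n x j t - gbar / 2 * (norm g)\<^sup>2"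
      using pol by (simp add: algebra_simps)
    also have "\<dots> \<le> E0 + gbar / 2 * (L\<^sup>2 * gbar\<^sup>2 * real t * Bs y n x j t) + beta (Suc t) * Bs y n x j t - gbar / 2 * (norm g)\<^sup>2"
      using kap db gbar_pos by (intro add_mono diff_mono order_refl mult_left_mono) auto
    also have "\<dots> = beta t * Bs y n x j t - gbar / 2 * (norm g)\<^sup>2 + E0"
      unfolding bs by (simp add: algebra_simps)
    finally show ?thesis .
  qed
  have "c1 * (norm (hh - (1 / (L * gbar * real K)) *\<^sub>R g))\<^sup>2 + (1 / real P) * (\<Sum>j=1..P. beta (Suc t) * (Bs y n x j t + (norm (h j))\<^sup>2))
     \<le> (1 / real P) * (\<Sum>j=1..P. c1 * (norm (h j))\<^sup>2 - gbar * (g \<bullet> h j) + beta (Suc t) * (Bs y n x j t + (norm (h j))\<^sup>2))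
        + (norm g)\<^sup>2 / (2 * L * real K)"
  proof -
    have "c1 * (norm hh)\<^sup>2 \<le> c1 * ((1 / real P) * (\<Sum>j=1..P. (norm (h j))\<^sup>2))"
      using E2 L_pos gbar_pos K_real unfolding c1_def by (intro mult_left_mono) auto
    then show ?thesis unfolding E1 E3
      by (simp add: sum.distrib sum_subtractf sum_distrib_left algebra_simps)
  qed
  also have "\<dots> \<le> (1 / real P) * (\<Sum>j=1..P. beta t * Bs y n x j t - gbar / 2 * (norm g)\<^sup>2 + E0) + (norm g)\<^sup>2 / (2 * L * real K)"
    using P_real by (intro add_right_mono mult_left_mono sum_mono Tj) auto
  also have "\<dots> = (1 / real P) * (\<Sum>j=1..P. beta t * Bs y n x j t) + et x t"
  proof -
    have "(1 / real P) * (\<Sum>j=1..P. beta t * Bs y n x j t - gbar / 2 * (norm g)\<^sup>2 + E0)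
        = (1 / real P) * (\<Sum>j=1..P. beta t * Bs y n x j t) - gbar / 2 * (norm g)\<^sup>2 + E0"
    proof -
      have "(\<Sum>j=1..P. beta t * Bs y n x j t - gbar / 2 * (norm g)\<^sup>2 + E0)
          = (\<Sum>j=1..P. beta t * Bs y n x j t) - real P * (gbar / 2 * (norm g)\<^sup>2) + real P * E0"
        by (simp add: sum.distrib sum_subtractf)
      then show ?thesis using P_real by (simp add: field_simps)
    qed
    moreover have "et x t = (norm g)\<^sup>2 / (2 * L * real K) - gbar / 2 * (norm g)\<^sup>2 + E0"
      unfolding et_def E0_def g_def using L_pos K_real by (simp add: field_simps)
    ultimately show ?thesis by simp
  qed
  finally show ?thesis unfolding c1_def hh_def h_def g_def .
qed

end

lemma nn_lin:
  fixes f0 :: "'b \<Rightarrow> real" and f :: "'j \<Rightarrow> 'b \<Rightarrow> real"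
  assumes J: "finite J" and c0: "0 \<le> c0" and w0: "0 \<le> w0" and w: "\<And>j. j \<in> J \<Longrightarrow> 0 \<le> w j"
    and f0m: "f0 \<in> borel_measurable N" and fm: "\<And>j. j \<in> J \<Longrightarrow> f j \<in> borel_measurable N"
    and f0n: "\<And>\<omega>. 0 \<le> f0 \<omega>" and fn: "\<And>j \<omega>. j \<in> J \<Longrightarrow> 0 \<le> f j \<omega>"
    and b0: "0 \<le> b0" and b: "\<And>j. j \<in> J \<Longrightarrow> 0 \<le> b j"
    and i0: "(\<integral>\<^sup>+\<omega>. ennreal (f0 \<omega>) \<partial>N) \<le> ennreal b0"
    and i: "\<And>j. j \<in> J \<Longrightarrow> (\<integral>\<^sup>+\<omega>. ennreal (f j \<omega>) \<partial>N) \<le> ennreal (b j)"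
    and one: "emeasure N (space N) = 1"
  shows "(\<integral>\<^sup>+\<omega>. ennreal (c0 + w0 * f0 \<omega> + (\<Sum>j\<in>J. w j * f j \<omega>)) \<partial>N)
         \<le> ennreal (c0 + w0 * b0 + (\<Sum>j\<in>J. w j * b j))"
proof -
  have eq: "ennreal (c0 + w0 * f0 \<omega> + (\<Sum>j\<in>J. w j * f j \<omega>))
      = ennreal c0 + ennreal w0 * ennreal (f0 \<omega>) + (\<Sum>j\<in>J. ennreal (w j) * ennreal (f j \<omega>))" for \<omega>
    using c0 w0 w f0n fn
    by (simp add: ennreal_plus sum_nonneg ennreal_mult sum_ennreal[symmetric] del: sum_ennreal)
  have "(\<integral>\<^sup>+\<omega>. ennreal (c0 + w0 * f0 \<omega> + (\<Sum>j\<in>J. w j * f j \<omega>)) \<partial>N)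
      = (\<integral>\<^sup>+\<omega>. ennreal c0 + ennreal w0 * ennreal (f0 \<omega>) + (\<Sum>j\<in>J. ennreal (w j) * ennreal (f j \<omega>)) \<partial>N)"
    by (simp add: eq)
  also have "\<dots> = ennreal c0 + ennreal w0 * (\<integral>\<^sup>+\<omega>. ennreal (f0 \<omega>) \<partial>N)
      + (\<Sum>j\<in>J. ennreal (w j) * (\<integral>\<^sup>+\<omega>. ennreal (f j \<omega>) \<partial>N))"
    using f0m fm one
    by (simp add: nn_integral_add nn_integral_sum nn_integral_cmult)
  also have "\<dots> \<le> ennreal c0 + ennreal w0 * ennreal b0 + (\<Sum>j\<in>J. ennreal (w j) * ennreal (b j))"
    by (intro add_mono mult_left_mono sum_mono i0 i order_refl) auto
  also have "\<dots> = ennreal (c0 + w0 * b0 + (\<Sum>j\<in>J. w j * b j))"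
    using c0 w0 w b0 b
    by (simp add: ennreal_plus sum_nonneg ennreal_mult sum_ennreal[symmetric] del: sum_ennreal)
  finally show ?thesis .
qed

context kavg2 begin

lemma var_facts:
  fixes v :: 'a
  shows "integrable D (\<lambda>y. G v y - gradF v)"
    and "integrable D (\<lambda>y. (norm (G v y - gradF v))\<^sup>2)"
    and "(\<integral>y. G v y - gradF v \<partial>D) = 0"
    and "(\<integral>y. (norm (G v y - gradF v))\<^sup>2 \<partial>D) \<le> M"
proof -
  interpret D: prob_space D by (rule D_prob)
  have eq: "(norm (G v y - gradF v))\<^sup>2 = (norm (G v y))\<^sup>2 - 2 * (gradF v \<bullet> G v y) + (norm (gradF v))\<^sup>2" for y
    unfolding power2_norm_eq_inner by (simp add: inner_diff_left inner_diff_right inner_commute)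
  have i1: "integrable D (\<lambda>y. (norm (G v y))\<^sup>2 - 2 * (gradF v \<bullet> G v y))"
    by (intro Bochner_Integration.integrable_diff G_sq_int integrable_mult_right integrable_inner_right G_int)
  have i2: "integrable D (\<lambda>y. (norm (G v y))\<^sup>2 - 2 * (gradF v \<bullet> G v y) + (norm (gradF v))\<^sup>2)"
    by (intro Bochner_Integration.integrable_add i1 D.integrable_const)
  show "integrable D (\<lambda>y. G v y - gradF v)"
    by (intro Bochner_Integration.integrable_diff G_int D.integrable_const)
  show "integrable D (\<lambda>y. (norm (G v y - gradF v))\<^sup>2)"
    unfolding eq by (rule i2)
  show "(\<integral>y. G v y - gradF v \<partial>D) = 0"
    using G_int unbiased by (simp add: Bochner_Integration.integral_diff D.prob_space)
  have "(\<integral>y. (norm (G v y - gradF v))\<^sup>2 \<partial>D) = (\<integral>y. (norm (G v y))\<^sup>2 \<partial>D) - (norm (gradF v))\<^sup>2"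
  proof -
    have "(\<integral>y. (norm (G v y - gradF v))\<^sup>2 \<partial>D)
        = (\<integral>y. (norm (G v y))\<^sup>2 - 2 * (gradF v \<bullet> G v y) \<partial>D) + (norm (gradF v))\<^sup>2"
      unfolding eq using i1 by (simp add: Bochner_Integration.integral_add D.prob_space)
    also have "(\<integral>y. (norm (G v y))\<^sup>2 - 2 * (gradF v \<bullet> G v y) \<partial>D)
        = (\<integral>y. (norm (G v y))\<^sup>2 \<partial>D) - 2 * (gradF v \<bullet> gradF v)"
      using G_sq_int G_int unbiased
      by (subst Bochner_Integration.integral_diff) (auto intro!: integrable_mult_right)
    finally show ?thesis by (simp add: power2_norm_eq_inner)
  qed
  then show "(\<integral>y. (norm (G v y - gradF v))\<^sup>2 \<partial>D) \<le> M"
    using variance[of v] unbiased[of v] by simp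
qed

definition agr where
  "agr y y' (n::nat) (t::nat) \<longleftrightarrow> (\<forall>j\<in>{1..P}. \<forall>k\<in>{1..t}. \<forall>s\<in>{1..Bb}. y (n, j, k, s) = y' (n, j, k, s))"

lemma agr_mono: "agr y y' n t \<Longrightarrow> t' \<le> t \<Longrightarrow> agr y y' n t'"
proof -
  assume a: "agr y y' n t" and tt: "t' \<le> t"
  show ?thesis unfolding agr_def
  proof (intro ballI)
    fix j k s assume h: "j \<in> {1..P}" "k \<in> {1..t'}" "s \<in> {1..Bb}"
    then have "k \<in> {1..t}" using tt by auto
    then show "y (n, j, k, s) = y' (n, j, k, s)" using a h unfolding agr_def by blast
  qed
qed

lemma loc_agr: "agr y y' n t \<Longrightarrow> j \<in> {1..P} \<Longrightarrow> loc y n j x t = loc y' n j x t"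
  unfolding agr_def by (intro loc_local) auto

lemma gb_agr: "agr y y' n (Suc t) \<Longrightarrow> j \<in> {1..P} \<Longrightarrow> gb y n x j t = gb y' n x j t"
  unfolding gb_def using loc_agr[OF agr_mono[of y y' n "Suc t" t]]
  by (intro arg_cong2[where f="(*\<^sub>R)"] refl sum.cong) (auto simp: agr_def)

lemma uu_agr: "agr y y' n (Suc t) \<Longrightarrow> uu y n x t = uu y' n x t"
  unfolding uu_def by (intro arg_cong2[where f="(*\<^sub>R)"] refl sum.cong gb_agr) auto

lemma Qf_agr: "agr y y' n (Suc t) \<Longrightarrow> Qf y n x t = Qf y' n x t"
  unfolding Qf_def using uu_agr by simp

lemma Yv_agr: "agr y y' n (Suc t) \<Longrightarrow> j \<in> {1..P} \<Longrightarrow> Yv y n x j t = Yv y' n x j t"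
  unfolding Yv_def using gb_agr by simp

lemma Bs_agr: "agr y y' n t \<Longrightarrow> j \<in> {1..P} \<Longrightarrow> Bs y n x j t = Bs y' n x j t"
proof -
  assume a: "agr y y' n t" and j: "j \<in> {1..P}"
  have "Yv y n x j i = Yv y' n x j i" if "i \<in> {..<t}" for i
    using agr_mono[OF a, of "Suc i"] that j by (intro Yv_agr) auto
  then show ?thesis unfolding Bs_def by (rule sum.cong[OF refl])
qed

lemma Psi_agr: "agr y y' n t \<Longrightarrow> Psi y n x t = Psi y' n x t"
proof -
  assume a: "agr y y' n t"
  have "Qf y n x i = Qf y' n x i" if "i \<in> {..<t}" for i
    using agr_mono[OF a, of "Suc i"] that by (intro Qf_agr) auto
  moreover have "Bs y n x j t = Bs y' n x j t" if "j \<in> {1..P}" for j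
    using a that by (rule Bs_agr)
  ultimately show ?thesis unfolding Psi_def by simp
qed

definition comps where
  "comps N Yf (n::nat) (t::nat) \<longleftrightarrow> (\<forall>j\<in>{1..P}. \<forall>k\<in>{1..t}. \<forall>s\<in>{1..Bb}. (\<lambda>z. Yf z (n, j, k, s)) \<in> measurable N D)"

lemma comps_mono: "comps N Yf n t \<Longrightarrow> t' \<le> t \<Longrightarrow> comps N Yf n t'"
proof -
  assume a: "comps N Yf n t" and tt: "t' \<le> t"
  show ?thesis unfolding comps_def
  proof (intro ballI)
    fix j k s assume h: "j \<in> {1..P}" "k \<in> {1..t'}" "s \<in> {1..Bb}"
    then have "k \<in> {1..t}" using tt by auto
    then show "(\<lambda>z. Yf z (n, j, k, s)) \<in> measurable N D" using a h unfolding comps_def by blast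
  qed
qed

lemma loc_m: "comps N Yf n t \<Longrightarrow> j \<in> {1..P} \<Longrightarrow> (\<lambda>z. loc (Yf z) n j x t) \<in> borel_measurable N"
  unfolding comps_def by (intro loc_meas) auto

lemma gb_m: "comps N Yf n (Suc t) \<Longrightarrow> j \<in> {1..P} \<Longrightarrow> (\<lambda>z. gb (Yf z) n x j t) \<in> borel_measurable N"
proof -
  assume c: "comps N Yf n (Suc t)" and j: "j \<in> {1..P}"
  have l: "(\<lambda>z. loc (Yf z) n j x t) \<in> borel_measurable N"
    using loc_m[OF comps_mono[OF c] j] by auto
  have "(\<lambda>z. G (loc (Yf z) n j x t) (Yf z (n, j, Suc t, s))) \<in> borel_measurable N" if "s \<in> {1..Bb}" for s
    using c j that by (intro G_meas' l) (auto simp: comps_def)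
  then show ?thesis unfolding gb_def by (intro borel_measurable_scaleR borel_measurable_sum) auto
qed

lemma uu_m: "comps N Yf n (Suc t) \<Longrightarrow> (\<lambda>z. uu (Yf z) n x t) \<in> borel_measurable N"
  unfolding uu_def by (intro borel_measurable_scaleR borel_measurable_sum gb_m) auto

lemma Qf_m: "comps N Yf n (Suc t) \<Longrightarrow> (\<lambda>z. Qf (Yf z) n x t) \<in> borel_measurable N"
proof -
  assume c: "comps N Yf n (Suc t)"
  have m[measurable]: "(\<lambda>z. uu (Yf z) n x t) \<in> borel_measurable N" by (rule uu_m[OF c])
  show ?thesis unfolding Qf_def by measurable
qed

lemma Yv_m: "comps N Yf n (Suc t) \<Longrightarrow> j \<in> {1..P} \<Longrightarrow> (\<lambda>z. Yv (Yf z) n x j t) \<in> borel_measurable N"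
proof -
  assume c: "comps N Yf n (Suc t)" and j: "j \<in> {1..P}"
  have m[measurable]: "(\<lambda>z. gb (Yf z) n x j t) \<in> borel_measurable N" by (rule gb_m[OF c j])
  show ?thesis unfolding Yv_def by measurable
qed

lemma Bs_m: "comps N Yf n t \<Longrightarrow> j \<in> {1..P} \<Longrightarrow> (\<lambda>z. Bs (Yf z) n x j t) \<in> borel_measurable N"
proof -
  assume a: "comps N Yf n t" and j: "j \<in> {1..P}"
  have "(\<lambda>z. Yv (Yf z) n x j i) \<in> borel_measurable N" if "i \<in> {..<t}" for i
    using comps_mono[OF a, of "Suc i"] that j by (intro Yv_m) auto
  then show ?thesis unfolding Bs_def by (rule borel_measurable_sum)
qed

lemma Psi_m: "comps N Yf n t \<Longrightarrow> (\<lambda>z. Psi (Yf z) n x t) \<in> borel_measurable N"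
proof -
  assume a: "comps N Yf n t"
  have "(\<lambda>z. Qf (Yf z) n x i) \<in> borel_measurable N" if "i \<in> {..<t}" for i
    using comps_mono[OF a, of "Suc i"] that by (intro Qf_m) auto
  then have m1[measurable]: "(\<lambda>z. \<Sum>i<t. Qf (Yf z) n x i) \<in> borel_measurable N"
    by (rule borel_measurable_sum)
  have "(\<lambda>z. beta t * Bs (Yf z) n x j t) \<in> borel_measurable N" if "j \<in> {1..P}" for j
    using Bs_m[OF a that] by measurable
  then have m2[measurable]: "(\<lambda>z. \<Sum>j=1..P. beta t * Bs (Yf z) n x j t) \<in> borel_measurable N"
    by (rule borel_measurable_sum)
  show ?thesis unfolding Psi_def by measurable
qed

lemma Qf_nonneg: "Qf y n x t \<ge> 0"
  unfolding Qf_def using L_pos gbar_pos by simp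

lemma Bs_nonneg: "Bs y n x j t \<ge> 0"
  unfolding Bs_def Yv_def by (simp add: sum_nonneg)

lemma Psi_nonneg: "t \<le> K \<Longrightarrow> Psi y n x t \<ge> 0"
  unfolding Psi_def using P_real beta_nonneg Qf_nonneg Bs_nonneg
  by (intro add_nonneg_nonneg sum_nonneg mult_nonneg_nonneg) auto

end

context kavg2 begin

definition ct where
  "ct x t = L * gbar\<^sup>2 * real K / 2 * (M / (real P * real Bb)) + beta (Suc t) * (M / real Bb) + et x t"

lemma layer:
  assumes n1: "1 \<le> n" and tK: "t < K"
    and st: "\<And>\<omega>'. agr (Yw \<omega>') y0 n t"
    and ly: "\<And>\<omega>' j s. j \<in> {1..P} \<Longrightarrow> s \<in> {1..Bb} \<Longrightarrow> Yw \<omega>' (n, j, Suc t, s) = XI (n, j, Suc t, s) \<omega>'"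
  shows "(\<integral>\<^sup>+\<omega>'. ennreal (Psi (Yw \<omega>') n x (Suc t)) \<partial>MO) \<le> ennreal (Psi y0 n x t + ct x t)"
proof -
  define v where "v j = loc y0 n j x t" for j
  define h where "h j = gradF (v j)" for j
  define g where "g = gradF x"
  define T where "T = {1..P} \<times> {1..Bb}"
  define \<iota> where "\<iota> p = (n, fst p, Suc t, snd p)" for p :: "nat \<times> nat"
  define c where "c p y = G (v (fst p)) y - h (fst p)" for p :: "nat \<times> nat" and y
  define c1 where "c1 = L * gbar\<^sup>2 * real K / 2"
  define hh where "hh = (1 / real P) *\<^sub>R (\<Sum>j=1..P. h j)"
  define a where "a = hh - (1 / (L * gbar * real K)) *\<^sub>R g"
  define \<alpha> where "\<alpha> = 1 / (real P * real Bb)"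
  define f0 where "f0 \<omega>' = (norm (a + \<alpha> *\<^sub>R (\<Sum>p\<in>T. c p (XI (\<iota> p) \<omega>'))))\<^sup>2" for \<omega>'
  define f where "f j \<omega>' = (norm (h j + (1 / real Bb) *\<^sub>R (\<Sum>s\<in>{1..Bb}. c (j, s) (XI (\<iota> (j, s)) \<omega>'))))\<^sup>2" for j \<omega>'
  define c0 where "c0 = (\<Sum>i<t. Qf y0 n x i) + (1 / real P) * (\<Sum>j=1..P. beta (Suc t) * Bs y0 n x j t)"
  have locv: "loc (Yw \<omega>') n j x t = v j" if "j \<in> {1..P}" for \<omega>' j
    unfolding v_def using loc_agr[OF st that] .
  have gbe: "gb (Yw \<omega>') n x j t = h j + (1 / real Bb) *\<^sub>R (\<Sum>s\<in>{1..Bb}. c (j, s) (XI (\<iota> (j, s)) \<omega>'))"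
    if j: "j \<in> {1..P}" for \<omega>' j
  proof -
    have "gb (Yw \<omega>') n x j t = (1 / real Bb) *\<^sub>R (\<Sum>s=1..Bb. G (v j) (XI (n, j, Suc t, s) \<omega>'))"
      unfolding gb_def locv[OF j] using ly[OF j] by simp
    also have "\<dots> = h j + (1 / real Bb) *\<^sub>R (\<Sum>s\<in>{1..Bb}. c (j, s) (XI (\<iota> (j, s)) \<omega>'))"
      unfolding c_def \<iota>_def using Bb_real
      by (simp add: sum_subtractf sum_constant_scaleR scaleR_diff_right)
    finally show ?thesis .
  qed
  have uue: "uu (Yw \<omega>') n x t = hh + \<alpha> *\<^sub>R (\<Sum>p\<in>T. c p (XI (\<iota> p) \<omega>'))" for \<omega>'
  proof -
    have "uu (Yw \<omega>') n x t = (1 / real P) *\<^sub>R (\<Sum>j=1..P. h j + (1 / real Bb) *\<^sub>R (\<Sum>s\<in>{1..Bb}. c (j, s) (XI (\<iota> (j, s)) \<omega>')))"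
      unfolding uu_def by (simp add: gbe)
    also have "\<dots> = hh + \<alpha> *\<^sub>R (\<Sum>j=1..P. \<Sum>s\<in>{1..Bb}. c (j, s) (XI (\<iota> (j, s)) \<omega>'))"
      unfolding hh_def \<alpha>_def by (simp add: sum.distrib scaleR_add_right scaleR_sum_right[symmetric])
    also have "(\<Sum>j=1..P. \<Sum>s\<in>{1..Bb}. c (j, s) (XI (\<iota> (j, s)) \<omega>')) = (\<Sum>p\<in>T. c p (XI (\<iota> p) \<omega>'))"
      unfolding T_def by (simp add: sum.cartesian_product)
    finally show ?thesis .
  qed
  have Qfe: "Qf (Yw \<omega>') n x t = c1 * f0 \<omega>'" for \<omega>'
    unfolding Qf_def c1_def f0_def uue a_def g_def by (simp add: algebra_simps)
  have Yve: "Yv (Yw \<omega>') n x j t = f j \<omega>'" if "j \<in> {1..P}" for \<omega>' j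
    unfolding Yv_def f_def gbe[OF that] ..
  have Psie: "Psi (Yw \<omega>') n x (Suc t) = c0 + c1 * f0 \<omega>' + (\<Sum>j\<in>{1..P}. (beta (Suc t) / real P) * f j \<omega>')" for \<omega>'
  proof -
    have q: "(\<Sum>i<Suc t. Qf (Yw \<omega>') n x i) = (\<Sum>i<t. Qf y0 n x i) + c1 * f0 \<omega>'"
    proof -
      have "Qf (Yw \<omega>') n x i = Qf y0 n x i" if "i < t" for i
        using agr_mono[OF st, of "Suc i"] that by (intro Qf_agr) auto
      then show ?thesis by (simp add: Qfe)
    qed
    have b: "Bs (Yw \<omega>') n x j (Suc t) = Bs y0 n x j t + f j \<omega>'" if "j \<in> {1..P}" for j
      unfolding Bs_def using Bs_agr[OF st that] Yve[OF that] by (simp add: Bs_def)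
    have "(\<Sum>j=1..P. beta (Suc t) * Bs (Yw \<omega>') n x j (Suc t)) = (\<Sum>j=1..P. beta (Suc t) * Bs y0 n x j t + beta (Suc t) * f j \<omega>')"
      by (intro sum.cong) (simp_all add: b algebra_simps)
    then show ?thesis unfolding Psi_def q c0_def
      by (simp add: sum.distrib sum_distrib_left algebra_simps)
  qed
  have vf: "integrable D (c p)" "integrable D (\<lambda>y. (norm (c p y))\<^sup>2)" "(\<integral>y. c p y \<partial>D) = 0"
    "(\<integral>y. (norm (c p y))\<^sup>2 \<partial>D) \<le> M" for p
    unfolding c_def h_def using var_facts[of "v (fst p)"] by auto
  have cm: "c p \<in> borel_measurable D" for p using vf(1) by (rule borel_measurable_integrable)
  have \<iota>I: "\<iota> p \<in> Iset" if "p \<in> T" for p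
    using that n1 tK unfolding \<iota>_def T_def Iset_def by auto
  have i0: "(\<integral>\<^sup>+\<omega>. ennreal (f0 \<omega>) \<partial>MO) \<le> ennreal ((norm a)\<^sup>2 + \<alpha>\<^sup>2 * (real (card T) * M))"
    unfolding f0_def
    by (rule sum_indep) (use n1 tK in \<open>auto simp: T_def \<iota>_def inj_on_def vf Iset_def\<close>)
  have i: "(\<integral>\<^sup>+\<omega>. ennreal (f j \<omega>) \<partial>MO) \<le> ennreal ((norm (h j))\<^sup>2 + (1 / real Bb)\<^sup>2 * (real (card {1..Bb}) * M))"
    if j: "j \<in> {1..P}" for j
    unfolding f_def
    by (rule sum_indep[where \<iota>="\<lambda>s. \<iota> (j, s)" and c="\<lambda>s. c (j, s)"])
       (use j n1 tK in \<open>auto simp: \<iota>_def inj_on_def vf Iset_def\<close>)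
  have f0m: "f0 \<in> borel_measurable MO"
  proof -
    have "(\<lambda>\<omega>. c p (XI (\<iota> p) \<omega>)) \<in> borel_measurable MO" if "p \<in> T" for p
      by (rule measurable_compose[OF XI_meas[OF \<iota>I[OF that]] cm])
    then have [measurable]: "(\<lambda>\<omega>. \<Sum>p\<in>T. c p (XI (\<iota> p) \<omega>)) \<in> borel_measurable MO"
      by (rule borel_measurable_sum)
    show ?thesis unfolding f0_def by measurable
  qed
  have fm: "f j \<in> borel_measurable MO" if j: "j \<in> {1..P}" for j
  proof -
    have "(\<lambda>\<omega>. c (j, s) (XI (\<iota> (j, s)) \<omega>)) \<in> borel_measurable MO" if "s \<in> {1..Bb}" for s
      using j that by (intro measurable_compose[OF XI_meas cm] \<iota>I) (auto simp: T_def)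
    then have [measurable]: "(\<lambda>\<omega>. \<Sum>s\<in>{1..Bb}. c (j, s) (XI (\<iota> (j, s)) \<omega>)) \<in> borel_measurable MO"
      by (rule borel_measurable_sum)
    show ?thesis unfolding f_def by measurable
  qed
  have c0n: "0 \<le> c0" unfolding c0_def
    using P_real beta_nonneg[of "Suc t"] tK Qf_nonneg Bs_nonneg
    by (intro add_nonneg_nonneg sum_nonneg mult_nonneg_nonneg) auto
  have c1n: "0 \<le> c1" unfolding c1_def using L_pos by simp
  have bn: "0 \<le> beta (Suc t) / real P" using beta_nonneg[of "Suc t"] tK P_real by simp
  have "(\<integral>\<^sup>+\<omega>'. ennreal (Psi (Yw \<omega>') n x (Suc t)) \<partial>MO)
      = (\<integral>\<^sup>+\<omega>'. ennreal (c0 + c1 * f0 \<omega>' + (\<Sum>j\<in>{1..P}. (beta (Suc t) / real P) * f j \<omega>')) \<partial>MO)"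
    by (simp add: Psie)
  also have "\<dots> \<le> ennreal (c0 + c1 * ((norm a)\<^sup>2 + \<alpha>\<^sup>2 * (real (card T) * M))
      + (\<Sum>j\<in>{1..P}. (beta (Suc t) / real P) * ((norm (h j))\<^sup>2 + (1 / real Bb)\<^sup>2 * (real (card {1..Bb}) * M))))"
    using M_nonneg
    by (intro nn_lin c0n c1n bn f0m fm i0 i prob_space.emeasure_space_1[OF prob])
       (auto simp: f0_def f_def)
  also have "\<dots> \<le> ennreal (Psi y0 n x t + ct x t)"
  proof (intro ennreal_leI)
    have sd: "c1 * (norm a)\<^sup>2 + (1 / real P) * (\<Sum>j=1..P. beta (Suc t) * (Bs y0 n x j t + (norm (h j))\<^sup>2))
        \<le> (1 / real P) * (\<Sum>j=1..P. beta t * Bs y0 n x j t) + et x t"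
      using step_det[OF tK, of y0 n x] unfolding c1_def a_def hh_def h_def v_def g_def .
    have e1: "c1 * ((norm a)\<^sup>2 + \<alpha>\<^sup>2 * (real (card T) * M)) = c1 * (norm a)\<^sup>2 + c1 * (M / (real P * real Bb))"
      unfolding \<alpha>_def T_def using P_real Bb_real by (simp add: field_simps power2_eq_square)
    have e2: "(\<Sum>j\<in>{1..P}. (beta (Suc t) / real P) * ((norm (h j))\<^sup>2 + (1 / real Bb)\<^sup>2 * (real (card {1..Bb}) * M)))
        = (1 / real P) * (\<Sum>j=1..P. beta (Suc t) * (norm (h j))\<^sup>2) + beta (Suc t) * (M / real Bb)"
    proof -
      have "(beta (Suc t) / real P) * ((norm (h j))\<^sup>2 + (1 / real Bb)\<^sup>2 * (real (card {1..Bb}) * M))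
          = (1 / real P) * (beta (Suc t) * (norm (h j))\<^sup>2) + (beta (Suc t) / real P) * (M / real Bb)" for j
        using Bb_real P_real by (simp add: field_simps power2_eq_square)
      then have "(\<Sum>j\<in>{1..P}. (beta (Suc t) / real P) * ((norm (h j))\<^sup>2 + (1 / real Bb)\<^sup>2 * (real (card {1..Bb}) * M)))
          = (\<Sum>j\<in>{1..P}. (1 / real P) * (beta (Suc t) * (norm (h j))\<^sup>2)) + real P * ((beta (Suc t) / real P) * (M / real Bb))"
        by (simp add: sum.distrib)
      then show ?thesis using P_real by (simp add: sum_distrib_left[symmetric] sum_divide_distrib[symmetric])
    qed
    have e3: "c0 + (1 / real P) * (\<Sum>j=1..P. beta (Suc t) * (norm (h j))\<^sup>2)
        = (\<Sum>i<t. Qf y0 n x i) + (1 / real P) * (\<Sum>j=1..P. beta (Suc t) * (Bs y0 n x j t + (norm (h j))\<^sup>2))"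
      unfolding c0_def by (simp add: sum.distrib distrib_left algebra_simps)
    show "c0 + c1 * ((norm a)\<^sup>2 + \<alpha>\<^sup>2 * (real (card T) * M))
      + (\<Sum>j\<in>{1..P}. (beta (Suc t) / real P) * ((norm (h j))\<^sup>2 + (1 / real Bb)\<^sup>2 * (real (card {1..Bb}) * M)))
      \<le> Psi y0 n x t + ct x t"
      unfolding e1 e2 Psi_def ct_def c1_def[symmetric] using sd e3 by linarith
  qed
  finally show ?thesis .
qed

end

context kavg2 begin

definition mix :: "('i \<Rightarrow> bool) \<Rightarrow> ('i \<Rightarrow> 'y) \<Rightarrow> ('i \<Rightarrow> 'y) \<Rightarrow> 'i \<Rightarrow> 'y" where
  "mix A y1 y2 = (\<lambda>i. if A i then y1 i else y2 i)"

lemma split_mix: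
  assumes AB: "A \<inter> B = {}" "A \<subseteq> Iset" "B \<subseteq> Iset"
    and meas: "(\<lambda>z. \<Phi> (mix (\<lambda>i. i \<in> A) (fst z) (snd z))) \<in> borel_measurable (PiM A (\<lambda>_. D) \<Otimes>\<^sub>M PiM B (\<lambda>_. D))"
    and local: "\<And>y y'. (\<And>i. i \<in> A \<union> B \<Longrightarrow> y i = y' i) \<Longrightarrow> \<Phi> y = \<Phi> y'"
  shows "(\<integral>\<^sup>+\<omega>. \<Phi> (\<lambda>i. XI i \<omega>) \<partial>MO) = (\<integral>\<^sup>+\<omega>. (\<integral>\<^sup>+\<omega>'. \<Phi> (mix (\<lambda>i. i \<in> A) (\<lambda>i. XI i \<omega>) (\<lambda>i. XI i \<omega>')) \<partial>MO) \<partial>MO)"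
proof -
  define f where "f z = \<Phi> (mix (\<lambda>i. i \<in> A) (fst z) (snd z))" for z
  have ind: "prob_space.indep_var MO (PiM A (\<lambda>_. D)) (\<lambda>\<omega>. restrict (\<lambda>i. XI i \<omega>) A) (PiM B (\<lambda>_. D)) (\<lambda>\<omega>. restrict (\<lambda>i. XI i \<omega>) B)"
    using prob_space.indep_var_restrict[OF prob XI_indep AB] .
  have e1: "f (restrict (\<lambda>i. XI i \<omega>) A, restrict (\<lambda>i. XI i \<omega>) B) = \<Phi> (\<lambda>i. XI i \<omega>)" for \<omega>
    unfolding f_def by (rule local) (auto simp: mix_def)
  have e2: "f (restrict (\<lambda>i. XI i \<omega>) A, restrict (\<lambda>i. XI i \<omega>') B) = \<Phi> (mix (\<lambda>i. i \<in> A) (\<lambda>i. XI i \<omega>) (\<lambda>i. XI i \<omega>'))" for \<omega> \<omega>'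
    unfolding f_def by (rule local) (use AB(1) in \<open>auto simp: mix_def\<close>)
  show ?thesis
    using prob_space.indep_split[OF prob ind, of f] meas unfolding f_def[symmetric] e1 e2 by simp
qed

lemma comps_mix:
  assumes "\<And>j k s. j \<in> {1..P} \<Longrightarrow> k \<in> {1..t} \<Longrightarrow> s \<in> {1..Bb} \<Longrightarrow> (n, j, k, s) \<in> A \<union> B"
  shows "comps (PiM A (\<lambda>_. D) \<Otimes>\<^sub>M PiM B (\<lambda>_. D)) (\<lambda>z. mix (\<lambda>i. i \<in> A) (fst z) (snd z)) n t"
  unfolding comps_def
proof (intro ballI)
  fix j k s assume h: "j \<in> {1..P}" "k \<in> {1..t}" "s \<in> {1..Bb}"
  show "(\<lambda>z. mix (\<lambda>i. i \<in> A) (fst z) (snd z) (n, j, k, s)) \<in> measurable (PiM A (\<lambda>_. D) \<Otimes>\<^sub>M PiM B (\<lambda>_. D)) D"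
  proof (cases "(n, j, k, s) \<in> A")
    case True
    then show ?thesis unfolding mix_def
      by (simp add: measurable_compose[OF measurable_fst measurable_component_singleton])
  next
    case False
    then have "(n, j, k, s) \<in> B" using assms h by blast
    then show ?thesis using False unfolding mix_def
      by (simp add: measurable_compose[OF measurable_snd measurable_component_singleton])
  qed
qed

lemma comps_XI:
  assumes "1 \<le> n" "t \<le> K"
  shows "comps MO (\<lambda>\<omega> i. XI i \<omega>) n t"
  unfolding comps_def using assms by (auto intro!: xi_meas)

lemma et_nonneg: "et x t \<ge> 0"
  unfolding et_def using qK_le1 L_pos K_real gbar_pos
  by (intro add_nonneg_nonneg mult_nonneg_nonneg divide_nonneg_pos) auto

lemma ct_nonneg: "t < K \<Longrightarrow> ct x t \<ge> 0"
  unfolding ct_def using et_nonneg[of x t] beta_nonneg[of "Suc t"] L_pos gbar_pos K_real M_nonneg P_real Bb_real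
  by (intro add_nonneg_nonneg mult_nonneg_nonneg divide_nonneg_pos) auto

lemma Psi_0: "Psi y n x 0 = 0"
  unfolding Psi_def Bs_def by simp

lemma round_steps:
  assumes n1: "1 \<le> n"
  shows "t \<le> K \<Longrightarrow> (\<integral>\<^sup>+\<omega>. ennreal (Psi (\<lambda>i. XI i \<omega>) n x t) \<partial>MO) \<le> ennreal (\<Sum>i<t. ct x i)"
proof (induction t)
  case 0
  then show ?case by (simp add: Psi_0)
next
  case (Suc t)
  then have tK: "t < K" by simp
  define A where "A = {i \<in> Iset. fst i = n \<and> fst (snd (snd i)) \<le> t}"
  define B where "B = {i \<in> Iset. fst i = n \<and> fst (snd (snd i)) = Suc t}"
  have AB: "A \<inter> B = {}" "A \<subseteq> Iset" "B \<subseteq> Iset" unfolding A_def B_def by auto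
  have inAB: "(n, j, k, s) \<in> A \<union> B" if "j \<in> {1..P}" "k \<in> {1..Suc t}" "s \<in> {1..Bb}" for j k s
    using that n1 tK unfolding A_def B_def Iset_def by auto
  have "(\<integral>\<^sup>+\<omega>. ennreal (Psi (\<lambda>i. XI i \<omega>) n x (Suc t)) \<partial>MO)
      = (\<integral>\<^sup>+\<omega>. (\<integral>\<^sup>+\<omega>'. ennreal (Psi (mix (\<lambda>i. i \<in> A) (\<lambda>i. XI i \<omega>) (\<lambda>i. XI i \<omega>')) n x (Suc t)) \<partial>MO) \<partial>MO)"
  proof (rule split_mix[OF AB, where \<Phi>="\<lambda>y. ennreal (Psi y n x (Suc t))"])
    show "(\<lambda>z. ennreal (Psi (mix (\<lambda>i. i \<in> A) (fst z) (snd z)) n x (Suc t))) \<in> borel_measurable (PiM A (\<lambda>_. D) \<Otimes>\<^sub>M PiM B (\<lambda>_. D))"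
      using Psi_m[OF comps_mix[OF inAB]] by measurable
    fix y y' :: "nat \<times> nat \<times> nat \<times> nat \<Rightarrow> 'b"
    assume "\<And>i. i \<in> A \<union> B \<Longrightarrow> y i = y' i"
    then have "agr y y' n (Suc t)" unfolding agr_def using inAB by blast
    then show "ennreal (Psi y n x (Suc t)) = ennreal (Psi y' n x (Suc t))" by (simp add: Psi_agr)
  qed
  also have "\<dots> \<le> (\<integral>\<^sup>+\<omega>. ennreal (Psi (\<lambda>i. XI i \<omega>) n x t + ct x t) \<partial>MO)"
  proof (intro nn_integral_mono layer[OF n1 tK])
    fix \<omega> \<omega>'
    show "agr (mix (\<lambda>i. i \<in> A) (\<lambda>i. XI i \<omega>) (\<lambda>i. XI i \<omega>')) (\<lambda>i. XI i \<omega>) n t"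
      unfolding agr_def mix_def using n1 tK by (auto simp: A_def Iset_def)
    fix j s assume "j \<in> {1..P}" "s \<in> {1..Bb}"
    then show "mix (\<lambda>i. i \<in> A) (\<lambda>i. XI i \<omega>) (\<lambda>i. XI i \<omega>') (n, j, Suc t, s) = XI (n, j, Suc t, s) \<omega>'"
      unfolding mix_def by (auto simp: A_def)
  qed
  also have "\<dots> = (\<integral>\<^sup>+\<omega>. ennreal (Psi (\<lambda>i. XI i \<omega>) n x t) \<partial>MO) + ennreal (ct x t)"
  proof -
    have "(\<lambda>\<omega>. Psi (\<lambda>i. XI i \<omega>) n x t) \<in> borel_measurable MO"
      using Psi_m[OF comps_XI[OF n1]] tK by simp
    then show ?thesis
      using Psi_nonneg tK ct_nonneg[OF tK]
      by (simp add: ennreal_plus nn_integral_add prob_space.emeasure_space_1[OF prob])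
  qed
  also have "\<dots> \<le> ennreal (\<Sum>i<t. ct x i) + ennreal (ct x t)"
    using Suc by (intro add_right_mono) auto
  also have "\<dots> = ennreal (\<Sum>i<Suc t. ct x i)"
  proof -
    have "0 \<le> (\<Sum>i<t. ct x i)" using ct_nonneg tK by (intro sum_nonneg) auto
    then show ?thesis using ct_nonneg[OF tK] by (simp add: ennreal_plus[symmetric] del: ennreal_plus)
  qed
  finally show ?case .
qed

end

context kavg2 begin

definition Cc where
  "Cc = L * real K * gbar\<^sup>2 * M / (2 * real Bb) * (real K / real P + L * (2 * real K - 1) * (real K - 1) * gbar / 6)"

lemma sum_tt: "(\<Sum>t<m. real (Suc t) * (real (Suc t) - 1)) = real (m + 1) * real m * (real m - 1) / 3"
  by (induction m) (simp_all add: field_simps)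

lemma sum_ct: "(\<Sum>t<K. ct x t) = Cc + ((1 - L * gbar * real K) / (2 * L) + gbar * (L * gbar)\<^sup>2 / 2) * (norm (gradF x))\<^sup>2"
proof -
  define g2 where "g2 = (norm (gradF x))\<^sup>2"
  have K0: "0 \<in> {..<K}" using K_pos by auto
  have se: "(\<Sum>t<K. et x t) = real K * ((1 - L * gbar * real K) / (2 * L * real K) * g2) + gbar * (L * gbar)\<^sup>2 / 2 * g2"
  proof -
    have "(\<Sum>t<K. et x t) = (\<Sum>t<K. (1 - L * gbar * real K) / (2 * L * real K) * g2)
        + (\<Sum>t<K. (if t = 0 then gbar * (L * gbar)\<^sup>2 / 2 * g2 else 0))"
      unfolding et_def g2_def by (simp add: sum.distrib)
    also have "(\<Sum>t<K. (if t = 0 then gbar * (L * gbar)\<^sup>2 / 2 * g2 else 0)) = gbar * (L * gbar)\<^sup>2 / 2 * g2"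
      using K0 by (simp add: sum.delta)
    finally show ?thesis by simp
  qed
  have sb: "(\<Sum>t<K. beta (Suc t)) = gbar * (L * gbar)\<^sup>2 / 4 * (real K * (real K * (real K - 1)) - real (K + 1) * real K * (real K - 1) / 3)"
  proof -
    have "(\<Sum>t<K. beta (Suc t)) = gbar * (L * gbar)\<^sup>2 / 4 * (\<Sum>t<K. real K * (real K - 1) - real (Suc t) * (real (Suc t) - 1))"
      unfolding beta_def by (simp add: sum_distrib_left)
    also have "(\<Sum>t<K. real K * (real K - 1) - real (Suc t) * (real (Suc t) - 1))
        = real K * (real K * (real K - 1)) - real (K + 1) * real K * (real K - 1) / 3"
      unfolding sum_subtractf sum_tt by simp
    finally show ?thesis .
  qed
  have "(\<Sum>t<K. ct x t) = real K * (L * gbar\<^sup>2 * real K / 2 * (M / (real P * real Bb)))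
      + (\<Sum>t<K. beta (Suc t)) * (M / real Bb) + (\<Sum>t<K. et x t)"
    unfolding ct_def by (simp add: sum.distrib sum_distrib_right sum_divide_distrib)
  also have "\<dots> = Cc + ((1 - L * gbar * real K) / (2 * L) + gbar * (L * gbar)\<^sup>2 / 2) * g2"
    unfolding se sb Cc_def using K_real L_pos P_real Bb_real
    by (simp add: field_simps power2_eq_square)
  finally show ?thesis unfolding g2_def .
qed

lemma F_cont: "continuous_on UNIV F"
  using deriv by (intro continuous_at_imp_continuous_on ballI has_derivative_continuous) auto

lemma rnd_meas: "1 \<le> n \<Longrightarrow> (\<lambda>\<omega>. rnd (\<lambda>i. XI i \<omega>) n x) \<in> borel_measurable MO"
  unfolding rnd_def
  by (intro borel_measurable_scaleR borel_measurable_const borel_measurable_sum loc_m comps_XI) auto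

lemma Psi_K: "Psi y n x K = (\<Sum>t<K. Qf y n x t)"
  unfolding Psi_def beta_K by simp

lemma qlt1: "L * gbar < 1"
proof -
  have "(L * gbar)\<^sup>2 < 1\<^sup>2" using cond2 delta by (simp add: power_mult_distrib)
  then show ?thesis using L_pos gbar_pos by (smt (verit) power_mono)
qed

lemma round:
  assumes n1: "1 \<le> n" and Fx: "F x \<ge> Fs"
    and AEg: "AE \<omega> in MO. F (rnd (\<lambda>i. XI i \<omega>) n x) \<ge> Fs"
  shows "(\<integral>\<^sup>+\<omega>. ennreal (F (rnd (\<lambda>i. XI i \<omega>) n x) - Fs + gbar * (real K - (L * gbar)\<^sup>2) / 2 * (norm (gradF x))\<^sup>2) \<partial>MO)
         \<le> ennreal (F x - Fs + Cc)"
proof -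
  define g2 where "g2 = (norm (gradF x))\<^sup>2"
  define cK where "cK = gbar * (real K - (L * gbar)\<^sup>2) / 2"
  define R where "R = (\<Sum>t<K. ct x t)"
  define d where "d = ((1 - L * gbar * real K) / (2 * L) + gbar * (L * gbar)\<^sup>2 / 2) * g2"
  define E1 where "E1 = (\<integral>\<^sup>+\<omega>. ennreal (F (rnd (\<lambda>i. XI i \<omega>) n x) - Fs + cK * g2) \<partial>MO)"
  have g2n: "0 \<le> g2" unfolding g2_def by simp
  have Rd: "R = Cc + d" unfolding R_def d_def g2_def by (rule sum_ct)
  have dn: "0 \<le> d" unfolding d_def using qK_le1 L_pos gbar_pos g2n
    by (intro mult_nonneg_nonneg add_nonneg_nonneg divide_nonneg_pos) auto
  have cKd: "cK * g2 + d = g2 / (2 * L)"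
    unfolding cK_def d_def using L_pos K_real by (simp add: field_simps power2_eq_square)
  have cKn: "0 \<le> cK * g2"
  proof -
    have "(L * gbar)\<^sup>2 \<le> 1" using cond2 delta by (simp add: power_mult_distrib)
    then show ?thesis unfolding cK_def using K_real gbar_pos g2n by (intro mult_nonneg_nonneg) auto
  qed
  have pw: "ennreal (F (rnd (\<lambda>i. XI i \<omega>) n x) - Fs + cK * g2) + ennreal d
      \<le> ennreal (F x - Fs) + ennreal (Psi (\<lambda>i. XI i \<omega>) n x K)"
    if good: "F (rnd (\<lambda>i. XI i \<omega>) n x) \<ge> Fs" for \<omega>
  proof -
    have p: "F (rnd (\<lambda>i. XI i \<omega>) n x) + g2 / (2 * L) \<le> F x + Psi (\<lambda>i. XI i \<omega>) n x K"
      using pathwise unfolding Psi_K g2_def .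
    have b: "0 \<le> Psi (\<lambda>i. XI i \<omega>) n x K" by (rule Psi_nonneg) simp
    have "ennreal (F (rnd (\<lambda>i. XI i \<omega>) n x) - Fs + cK * g2) + ennreal d
        = ennreal (F (rnd (\<lambda>i. XI i \<omega>) n x) - Fs + cK * g2 + d)"
      using good cKn dn by (simp add: ennreal_plus[symmetric] del: ennreal_plus)
    also have "\<dots> \<le> ennreal (F x - Fs + Psi (\<lambda>i. XI i \<omega>) n x K)"
      using p cKd by (intro ennreal_leI) linarith
    also have "\<dots> = ennreal (F x - Fs) + ennreal (Psi (\<lambda>i. XI i \<omega>) n x K)"
      using Fx b by (simp add: ennreal_plus[symmetric] del: ennreal_plus)
    finally show ?thesis .
  qed
  have m1: "(\<lambda>\<omega>. ennreal (F (rnd (\<lambda>i. XI i \<omega>) n x) - Fs + cK * g2)) \<in> borel_measurable MO"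
    using borel_measurable_continuous_on[OF F_cont rnd_meas[OF n1]] by measurable
  have m2: "(\<lambda>\<omega>. Psi (\<lambda>i. XI i \<omega>) n x K) \<in> borel_measurable MO"
    using Psi_m[OF comps_XI[OF n1]] by simp
  have "E1 + ennreal d = (\<integral>\<^sup>+\<omega>. ennreal (F (rnd (\<lambda>i. XI i \<omega>) n x) - Fs + cK * g2) + ennreal d \<partial>MO)"
    unfolding E1_def using m1 by (simp add: nn_integral_add prob_space.emeasure_space_1[OF prob])
  also have "\<dots> \<le> (\<integral>\<^sup>+\<omega>. ennreal (F x - Fs) + ennreal (Psi (\<lambda>i. XI i \<omega>) n x K) \<partial>MO)"
    using AEg by (intro nn_integral_mono_AE) (auto elim!: eventually_mono intro: pw)
  also have "\<dots> = ennreal (F x - Fs) + (\<integral>\<^sup>+\<omega>. ennreal (Psi (\<lambda>i. XI i \<omega>) n x K) \<partial>MO)"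
    using m2 by (simp add: nn_integral_add prob_space.emeasure_space_1[OF prob])
  also have "\<dots> \<le> ennreal (F x - Fs) + ennreal R"
    unfolding R_def by (intro add_left_mono round_steps[OF n1]) simp
  finally have main: "E1 + ennreal d \<le> ennreal (F x - Fs) + ennreal R" .
  have Rn: "0 \<le> R" unfolding R_def using ct_nonneg by (intro sum_nonneg) auto
  have "E1 \<noteq> \<top>"
  proof
    assume "E1 = \<top>"
    then show False using main by (simp add: top_unique ennreal_plus[symmetric] del: ennreal_plus)
  qed
  then obtain r where r: "E1 = ennreal r" "0 \<le> r" by (cases E1) auto
  have "r + d \<le> F x - Fs + R"
    using main r Rn Fx dn by (simp add: ennreal_plus[symmetric] del: ennreal_plus)
  then have "r \<le> F x - Fs + Cc" unfolding Rd by simp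
  then show ?thesis
    using r unfolding E1_def[symmetric] cK_def[symmetric] g2_def[symmetric] by (simp add: ennreal_leI)
qed

end

context kavg2 begin

lemma gradF_cont: "continuous_on UNIV gradF"
proof (rule lipschitz_on_continuous_on)
  show "lipschitz_on L UNIV gradF"
    using lipschitz L_pos by (intro lipschitz_onI) (auto simp: dist_norm)
qed

lemma rnd_local:
  assumes "\<And>j k s. j \<in> {1..P} \<Longrightarrow> k \<in> {1..K} \<Longrightarrow> s \<in> {1..Bb} \<Longrightarrow> y (n, j, k, s) = y' (n, j, k, s)"
  shows "rnd y n x = rnd y' n x"
  unfolding rnd_def using assms by (intro arg_cong2[where f="(*\<^sub>R)"] refl sum.cong loc_local) auto

lemma rnd_m:
  assumes "comps N Yf n K" and "W \<in> borel_measurable N"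
  shows "(\<lambda>z. rnd (Yf z) n (W z)) \<in> borel_measurable N"
  unfolding rnd_def using assms
  by (intro borel_measurable_scaleR borel_measurable_const borel_measurable_sum loc_meas)
     (auto simp: comps_def)

lemma aux_m:
  assumes "\<And>i. i \<in> Iset \<Longrightarrow> fst i \<le> m \<Longrightarrow> (\<lambda>z. Yf z i) \<in> measurable N D"
  shows "(\<lambda>z. aux (Yf z) w1 m) \<in> borel_measurable N"
  using assms
proof (induction m)
  case 0 then show ?case by simp
next
  case (Suc m)
  have IH: "(\<lambda>z. aux (Yf z) w1 m) \<in> borel_measurable N" using Suc by auto
  have c: "comps N Yf (Suc m) K" unfolding comps_def using Suc.prems by (auto simp: Iset_def)
  show ?case unfolding aux_Suc by (rule rnd_m[OF c IH])
qed

lemma split_mix_AE: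
  assumes AB: "A \<inter> B = {}" "A \<subseteq> Iset" "B \<subseteq> Iset"
    and Gm: "{z \<in> space (PiM A (\<lambda>_. D) \<Otimes>\<^sub>M PiM B (\<lambda>_. D)). Gd (mix (\<lambda>i. i \<in> A) (fst z) (snd z))}
              \<in> sets (PiM A (\<lambda>_. D) \<Otimes>\<^sub>M PiM B (\<lambda>_. D))"
    and local: "\<And>y y'. (\<And>i. i \<in> A \<union> B \<Longrightarrow> y i = y' i) \<Longrightarrow> Gd y = Gd y'"
    and all: "\<And>\<omega>. \<omega> \<in> space MO \<Longrightarrow> Gd (\<lambda>i. XI i \<omega>)"
  shows "AE \<omega> in MO. AE \<omega>' in MO. Gd (mix (\<lambda>i. i \<in> A) (\<lambda>i. XI i \<omega>) (\<lambda>i. XI i \<omega>'))"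
proof -
  define Q where "Q z = Gd (mix (\<lambda>i. i \<in> A) (fst z) (snd z))" for z
  have ind: "prob_space.indep_var MO (PiM A (\<lambda>_. D)) (\<lambda>\<omega>. restrict (\<lambda>i. XI i \<omega>) A) (PiM B (\<lambda>_. D)) (\<lambda>\<omega>. restrict (\<lambda>i. XI i \<omega>) B)"
    using prob_space.indep_var_restrict[OF prob XI_indep AB] .
  have e1: "Q (restrict (\<lambda>i. XI i \<omega>) A, restrict (\<lambda>i. XI i \<omega>) B) = Gd (\<lambda>i. XI i \<omega>)" for \<omega>
    unfolding Q_def by (rule local) (auto simp: mix_def)
  have e2: "Q (restrict (\<lambda>i. XI i \<omega>) A, restrict (\<lambda>i. XI i \<omega>') B) = Gd (mix (\<lambda>i. i \<in> A) (\<lambda>i. XI i \<omega>) (\<lambda>i. XI i \<omega>'))" for \<omega> \<omega>'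
    unfolding Q_def by (rule local) (use AB(1) in \<open>auto simp: mix_def\<close>)
  have "AE \<omega> in MO. AE \<omega>' in MO. Q (restrict (\<lambda>i. XI i \<omega>) A, restrict (\<lambda>i. XI i \<omega>') B)"
    by (rule prob_space.indep_split_AE[OF prob ind]) (use Gm all e1 in \<open>auto simp: Q_def\<close>)
  then show ?thesis unfolding e2 .
qed

end

context kavg2 begin

lemma Cc_nonneg: "Cc \<ge> 0"
  unfolding Cc_def using L_pos gbar_pos M_nonneg K_real P_real Bb_real
  by (intro mult_nonneg_nonneg add_nonneg_nonneg divide_nonneg_pos) auto

lemma comps_XI': "(\<And>i. i \<in> Iset \<Longrightarrow> fst i \<le> m \<Longrightarrow> (\<lambda>\<omega>. XI i \<omega>) \<in> measurable MO D)"
  using XI_meas by simp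

lemma outer:
  fixes Fs w1 :: _
  assumes inU: "\<And>\<omega> m. \<omega> \<in> space MO \<Longrightarrow> F (aux (\<lambda>i. XI i \<omega>) w1 m) \<ge> Fs"
  shows "(\<integral>\<^sup>+\<omega>. ennreal (F (aux (\<lambda>i. XI i \<omega>) w1 m) - Fs)
            + ennreal (gbar * (real K - 1 + \<delta>) / 2 * (\<Sum>n<m. (norm (gradF (aux (\<lambda>i. XI i \<omega>) w1 n)))\<^sup>2)) \<partial>MO)
         \<le> ennreal (F w1 - Fs + real m * Cc)"
proof (induction m)
  case 0
  then show ?case by (simp add: prob_space.emeasure_space_1[OF prob])
next
  case (Suc m)
  define cc where "cc = gbar * (real K - 1 + \<delta>) / 2"
  define cK where "cK = gbar * (real K - (L * gbar)\<^sup>2) / 2"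
  have ccK: "cc \<le> cK" unfolding cc_def cK_def using cond2 gbar_pos by (simp add: power_mult_distrib)
  have cc0: "0 \<le> cc" unfolding cc_def using K_real delta gbar_pos by simp
  have Fw1: "F w1 \<ge> Fs"
  proof -
    obtain \<omega> where "\<omega> \<in> space MO" using prob_space.not_empty[OF prob] by auto
    from inU[OF this, of 0] show ?thesis by simp
  qed
  define A where "A = {i \<in> Iset. fst i \<le> m}"
  define B where "B = {i \<in> Iset. fst i = Suc m}"
  have AB: "A \<inter> B = {}" "A \<subseteq> Iset" "B \<subseteq> Iset" unfolding A_def B_def by auto
  define S where "S y = cc * (\<Sum>n<m. (norm (gradF (aux y w1 n)))\<^sup>2)" for y
  define \<Phi> where "\<Phi> y = ennreal (F (rnd y (Suc m) (aux y w1 m)) - Fs + cK * (norm (gradF (aux y w1 m)))\<^sup>2)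
      + ennreal (S y)" for y
  let ?N = "PiM A (\<lambda>_. D) \<Otimes>\<^sub>M PiM B (\<lambda>_. D)"
  let ?Y = "\<lambda>z. mix (\<lambda>i. i \<in> A) (fst z) (snd z)"
  have Sn: "0 \<le> S y" for y unfolding S_def using cc0 by (simp add: sum_nonneg)
  have compA: "(\<lambda>z. ?Y z i) \<in> measurable ?N D" if "i \<in> Iset" "fst i \<le> m" for i
  proof -
    have "i \<in> A" using that unfolding A_def by auto
    then show ?thesis unfolding mix_def
      by (simp add: measurable_compose[OF measurable_fst measurable_component_singleton])
  qed
  have compsB: "comps ?N ?Y (Suc m) K"
    by (rule comps_mix) (auto simp: A_def B_def Iset_def)
  have auxm: "(\<lambda>z. aux (?Y z) w1 n) \<in> borel_measurable ?N" if "n \<le> m" for n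
    using that by (intro aux_m compA) auto
  have [measurable]: "(\<lambda>z. aux (?Y z) w1 m) \<in> borel_measurable ?N" by (rule auxm) simp
  have [measurable]: "(\<lambda>z. rnd (?Y z) (Suc m) (aux (?Y z) w1 m)) \<in> borel_measurable ?N"
    by (intro rnd_m compsB auxm) simp
  have [measurable]: "(\<lambda>z. S (?Y z)) \<in> borel_measurable ?N"
  proof -
    have "(\<lambda>z. (norm (gradF (aux (?Y z) w1 n)))\<^sup>2) \<in> borel_measurable ?N" if "n \<in> {..<m}" for n
    proof -
      have "n \<le> m" using that by simp
      then show ?thesis using borel_measurable_continuous_on[OF gradF_cont auxm[of n]] by measurable
    qed
    then show ?thesis unfolding S_def by (intro borel_measurable_times borel_measurable_const borel_measurable_sum)
  qed
  have [measurable]: "(\<lambda>z. F (rnd (?Y z) (Suc m) (aux (?Y z) w1 m))) \<in> borel_measurable ?N"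
    by (intro borel_measurable_continuous_on[OF F_cont]) measurable
  have [measurable]: "(\<lambda>z. gradF (aux (?Y z) w1 m)) \<in> borel_measurable ?N"
    by (intro borel_measurable_continuous_on[OF gradF_cont]) measurable
  have \<Phi>m: "(\<lambda>z. \<Phi> (?Y z)) \<in> borel_measurable ?N"
    unfolding \<Phi>_def by measurable
  have loc_all: "aux y w1 n = aux y' w1 n \<and> rnd y (Suc m) (aux y w1 m) = rnd y' (Suc m) (aux y' w1 m)"
    if agree: "\<And>i. i \<in> A \<union> B \<Longrightarrow> y i = y' i" and n: "n \<le> m" for y y' n
  proof -
    have a: "aux y w1 k = aux y' w1 k" if "k \<le> m" for k
      using agree that by (intro aux_local) (auto simp: A_def)
    have "rnd y (Suc m) (aux y w1 m) = rnd y' (Suc m) (aux y w1 m)"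
      using agree by (intro rnd_local) (auto simp: B_def Iset_def)
    then show ?thesis using a[OF n] a[OF order_refl] by simp
  qed
  have \<Phi>loc: "\<Phi> y = \<Phi> y'" if agr: "\<And>i. i \<in> A \<union> B \<Longrightarrow> y i = y' i" for y y'
  proof -
    have l: "aux y w1 n = aux y' w1 n \<and> rnd y (Suc m) (aux y w1 m) = rnd y' (Suc m) (aux y' w1 m)" if "n \<le> m" for n
      by (rule loc_all[of y y' n]) (use agr that in auto)
    have "S y = S y'" unfolding S_def using l by (intro arg_cong2[where f="(*)"] refl sum.cong) auto
    moreover from l[OF order_refl] have e1: "aux y w1 m = aux y' w1 m"
      and e2: "rnd y (Suc m) (aux y w1 m) = rnd y' (Suc m) (aux y' w1 m)" by auto
    ultimately show ?thesis unfolding \<Phi>_def e2 by (simp only: e1)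
  qed
  have "(\<integral>\<^sup>+\<omega>. ennreal (F (aux (\<lambda>i. XI i \<omega>) w1 (Suc m)) - Fs)
            + ennreal (cc * (\<Sum>n<Suc m. (norm (gradF (aux (\<lambda>i. XI i \<omega>) w1 n)))\<^sup>2)) \<partial>MO)
      \<le> (\<integral>\<^sup>+\<omega>. \<Phi> (\<lambda>i. XI i \<omega>) \<partial>MO)"
  proof (intro nn_integral_mono)
    fix \<omega> assume \<omega>: "\<omega> \<in> space MO"
    define y where "y = (\<lambda>i. XI i \<omega>)"
    have good: "F (rnd y (Suc m) (aux y w1 m)) \<ge> Fs"
      using inU[OF \<omega>, of "Suc m"] unfolding y_def aux_Suc .
    have g0: "0 \<le> (norm (gradF (aux y w1 m)))\<^sup>2" by simp
    have "ennreal (F (aux y w1 (Suc m)) - Fs) + ennreal (cc * (\<Sum>n<Suc m. (norm (gradF (aux y w1 n)))\<^sup>2))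
        = ennreal (F (rnd y (Suc m) (aux y w1 m)) - Fs + cc * (norm (gradF (aux y w1 m)))\<^sup>2) + ennreal (S y)"
      using good cc0 Sn[of y] unfolding aux_Suc S_def
      by (simp add: ennreal_plus[symmetric] sum_nonneg distrib_left del: ennreal_plus)
    also have "\<dots> \<le> \<Phi> y"
      unfolding \<Phi>_def using ccK g0 by (intro add_right_mono ennreal_leI add_left_mono mult_right_mono) auto
    finally show "ennreal (F (aux (\<lambda>i. XI i \<omega>) w1 (Suc m)) - Fs)
            + ennreal (cc * (\<Sum>n<Suc m. (norm (gradF (aux (\<lambda>i. XI i \<omega>) w1 n)))\<^sup>2)) \<le> \<Phi> (\<lambda>i. XI i \<omega>)"
      unfolding y_def .
  qed
  also have "\<dots> = (\<integral>\<^sup>+\<omega>. (\<integral>\<^sup>+\<omega>'. \<Phi> (mix (\<lambda>i. i \<in> A) (\<lambda>i. XI i \<omega>) (\<lambda>i. XI i \<omega>')) \<partial>MO) \<partial>MO)"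
    by (rule split_mix[OF AB \<Phi>m \<Phi>loc])
  also have "\<dots> \<le> (\<integral>\<^sup>+\<omega>. ennreal (F (aux (\<lambda>i. XI i \<omega>) w1 m) - Fs + Cc) + ennreal (S (\<lambda>i. XI i \<omega>)) \<partial>MO)"
  proof (rule nn_integral_mono_AE)
    have "AE \<omega> in MO. AE \<omega>' in MO. Fs \<le> F (rnd (mix (\<lambda>i. i \<in> A) (\<lambda>i. XI i \<omega>) (\<lambda>i. XI i \<omega>')) (Suc m)
                 (aux (mix (\<lambda>i. i \<in> A) (\<lambda>i. XI i \<omega>) (\<lambda>i. XI i \<omega>')) w1 m))"
    proof (rule split_mix_AE[OF AB, where Gd="\<lambda>y. Fs \<le> F (rnd y (Suc m) (aux y w1 m))"])
      show "{z \<in> space ?N. Fs \<le> F (rnd (?Y z) (Suc m) (aux (?Y z) w1 m))} \<in> sets ?N"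
        by measurable
      show "\<And>y y'. (\<And>i. i \<in> A \<union> B \<Longrightarrow> y i = y' i) \<Longrightarrow>
           (Fs \<le> F (rnd y (Suc m) (aux y w1 m))) = (Fs \<le> F (rnd y' (Suc m) (aux y' w1 m)))"
        using loc_all by (metis order_refl)
      show "\<And>\<omega>. \<omega> \<in> space MO \<Longrightarrow> Fs \<le> F (rnd (\<lambda>i. XI i \<omega>) (Suc m) (aux (\<lambda>i. XI i \<omega>) w1 m))"
        using inU[of _ "Suc m"] by (simp add: aux_Suc)
    qed
    then have "AE \<omega> in MO. \<omega> \<in> space MO \<and> (AE \<omega>' in MO. Fs \<le> F (rnd (mix (\<lambda>i. i \<in> A) (\<lambda>i. XI i \<omega>) (\<lambda>i. XI i \<omega>')) (Suc m)
                 (aux (mix (\<lambda>i. i \<in> A) (\<lambda>i. XI i \<omega>) (\<lambda>i. XI i \<omega>')) w1 m)))"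
      using AE_space by (auto elim: eventually_mono simp: eventually_conj_iff)
    then show "AE \<omega> in MO. (\<integral>\<^sup>+\<omega>'. \<Phi> (mix (\<lambda>i. i \<in> A) (\<lambda>i. XI i \<omega>) (\<lambda>i. XI i \<omega>')) \<partial>MO)
        \<le> ennreal (F (aux (\<lambda>i. XI i \<omega>) w1 m) - Fs + Cc) + ennreal (S (\<lambda>i. XI i \<omega>))"
    proof (rule eventually_mono, elim conjE)
      fix \<omega>
      assume \<omega>sp: "\<omega> \<in> space MO"
      assume ae: "AE \<omega>' in MO. Fs \<le> F (rnd (mix (\<lambda>i. i \<in> A) (\<lambda>i. XI i \<omega>) (\<lambda>i. XI i \<omega>')) (Suc m)
                 (aux (mix (\<lambda>i. i \<in> A) (\<lambda>i. XI i \<omega>) (\<lambda>i. XI i \<omega>')) w1 m))"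
      define x where "x = aux (\<lambda>i. XI i \<omega>) w1 m"
      have mx: "\<And>\<omega>'. aux (mix (\<lambda>i. i \<in> A) (\<lambda>i. XI i \<omega>) (\<lambda>i. XI i \<omega>')) w1 n = aux (\<lambda>i. XI i \<omega>) w1 n"
        if "n \<le> m" for n
        using that by (intro aux_local) (auto simp: A_def mix_def)
      have mr: "\<And>\<omega>'. rnd (mix (\<lambda>i. i \<in> A) (\<lambda>i. XI i \<omega>) (\<lambda>i. XI i \<omega>')) (Suc m) x' = rnd (\<lambda>i. XI i \<omega>') (Suc m) x'" for x'
        by (intro rnd_local) (auto simp: A_def mix_def)
      have Smix: "S (mix (\<lambda>i. i \<in> A) (\<lambda>i. XI i \<omega>) (\<lambda>i. XI i \<omega>')) = S (\<lambda>i. XI i \<omega>)" for \<omega>'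
        unfolding S_def using mx by (intro arg_cong2[where f="(*)"] refl sum.cong) auto
      have ae': "AE \<omega>' in MO. Fs \<le> F (rnd (\<lambda>i. XI i \<omega>') (Suc m) x)"
        using ae unfolding mx[OF order_refl] mr x_def .
      have Fx: "Fs \<le> F x" using inU[OF \<omega>sp] unfolding x_def .
      have "(\<integral>\<^sup>+\<omega>'. \<Phi> (mix (\<lambda>i. i \<in> A) (\<lambda>i. XI i \<omega>) (\<lambda>i. XI i \<omega>')) \<partial>MO)
          = (\<integral>\<^sup>+\<omega>'. ennreal (F (rnd (\<lambda>i. XI i \<omega>') (Suc m) x) - Fs + cK * (norm (gradF x))\<^sup>2)
              + ennreal (S (\<lambda>i. XI i \<omega>)) \<partial>MO)"
        unfolding \<Phi>_def mx[OF order_refl] mr Smix x_def ..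
      also have "\<dots> = (\<integral>\<^sup>+\<omega>'. ennreal (F (rnd (\<lambda>i. XI i \<omega>') (Suc m) x) - Fs + cK * (norm (gradF x))\<^sup>2) \<partial>MO)
              + ennreal (S (\<lambda>i. XI i \<omega>))"
        using borel_measurable_continuous_on[OF F_cont rnd_meas[of "Suc m" x]]
        by (subst nn_integral_add) (auto simp: prob_space.emeasure_space_1[OF prob])
      also have "\<dots> \<le> ennreal (F x - Fs + Cc) + ennreal (S (\<lambda>i. XI i \<omega>))"
        using round[OF _ Fx ae'] unfolding cK_def by (intro add_right_mono) simp
      finally show "(\<integral>\<^sup>+\<omega>'. \<Phi> (mix (\<lambda>i. i \<in> A) (\<lambda>i. XI i \<omega>) (\<lambda>i. XI i \<omega>')) \<partial>MO)
        \<le> ennreal (F (aux (\<lambda>i. XI i \<omega>) w1 m) - Fs + Cc) + ennreal (S (\<lambda>i. XI i \<omega>))"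
        unfolding x_def .
    qed
  qed
  also have "\<dots> = (\<integral>\<^sup>+\<omega>. ennreal (F (aux (\<lambda>i. XI i \<omega>) w1 m) - Fs) + ennreal (S (\<lambda>i. XI i \<omega>)) \<partial>MO) + ennreal Cc"
  proof -
    have mX: "(\<lambda>\<omega>. aux (\<lambda>i. XI i \<omega>) w1 n) \<in> borel_measurable MO" for n
      by (intro aux_m XI_meas)
    have m1: "(\<lambda>\<omega>. ennreal (F (aux (\<lambda>i. XI i \<omega>) w1 m) - Fs)) \<in> borel_measurable MO"
      using borel_measurable_continuous_on[OF F_cont mX[of m]] by measurable
    have "(\<lambda>\<omega>. (norm (gradF (aux (\<lambda>i. XI i \<omega>) w1 n)))\<^sup>2) \<in> borel_measurable MO" for n
      using borel_measurable_continuous_on[OF gradF_cont mX[of n]] by measurable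
    then have m2: "(\<lambda>\<omega>. ennreal (S (\<lambda>i. XI i \<omega>))) \<in> borel_measurable MO"
      unfolding S_def by (intro measurable_compose[OF _ measurable_ennreal] borel_measurable_times
          borel_measurable_const borel_measurable_sum) auto
    have "(\<integral>\<^sup>+\<omega>. ennreal (F (aux (\<lambda>i. XI i \<omega>) w1 m) - Fs + Cc) + ennreal (S (\<lambda>i. XI i \<omega>)) \<partial>MO)
        = (\<integral>\<^sup>+\<omega>. (ennreal (F (aux (\<lambda>i. XI i \<omega>) w1 m) - Fs) + ennreal (S (\<lambda>i. XI i \<omega>))) + ennreal Cc \<partial>MO)"
    proof (intro nn_integral_cong)
      fix \<omega> assume "\<omega> \<in> space MO"
      from inU[OF this, of m] Cc_nonneg
      show "ennreal (F (aux (\<lambda>i. XI i \<omega>) w1 m) - Fs + Cc) + ennreal (S (\<lambda>i. XI i \<omega>))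
          = (ennreal (F (aux (\<lambda>i. XI i \<omega>) w1 m) - Fs) + ennreal (S (\<lambda>i. XI i \<omega>))) + ennreal Cc"
        by (simp add: ennreal_plus[symmetric] add_ac del: ennreal_plus)
    qed
    also have "\<dots> = (\<integral>\<^sup>+\<omega>. ennreal (F (aux (\<lambda>i. XI i \<omega>) w1 m) - Fs) + ennreal (S (\<lambda>i. XI i \<omega>)) \<partial>MO) + ennreal Cc"
      using m1 m2 by (subst nn_integral_add) (auto simp: prob_space.emeasure_space_1[OF prob])
    finally show ?thesis .
  qed
  also have "\<dots> \<le> ennreal (F w1 - Fs + real m * Cc) + ennreal Cc"
    using Suc.IH unfolding S_def cc_def by (intro add_right_mono) simp
  also have "\<dots> = ennreal (F w1 - Fs + real (Suc m) * Cc)"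
  proof -
    have "0 \<le> F w1 - Fs + real m * Cc" using Fw1 Cc_nonneg by simp
    then have "ennreal (F w1 - Fs + real m * Cc) + ennreal Cc = ennreal (F w1 - Fs + real m * Cc + Cc)"
      using Cc_nonneg by (rule ennreal_plus[symmetric])
    then show ?thesis by (simp add: algebra_simps)
  qed
  finally show ?case unfolding cc_def .
qed

lemma final:
  assumes inU: "\<And>\<omega> m. \<omega> \<in> space MO \<Longrightarrow> F (aux (\<lambda>i. XI i \<omega>) w1 m) \<ge> Fs"
    and N1: "1 \<le> N"
  shows "(\<integral>\<^sup>+\<omega>. ennreal ((1 / real N) * (\<Sum>n<N. (norm (gradF (aux (\<lambda>i. XI i \<omega>) w1 n)))\<^sup>2)) \<partial>MO)
    \<le> ennreal (2 * (F w1 - Fs) / (real N * (real K - 1 + \<delta>) * gbar)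
             + L * real K * gbar * M / (real Bb * (real K - 1 + \<delta>))
               * (real K / real P + L * (2 * real K - 1) * (real K - 1) * gbar / 6))"
proof -
  define cc where "cc = gbar * (real K - 1 + \<delta>) / 2"
  have ccp: "0 < cc" unfolding cc_def using K_real delta gbar_pos by simp
  have Np: "0 < real N" using N1 by simp
  define Sg where "Sg \<omega> = (\<Sum>n<N. (norm (gradF (aux (\<lambda>i. XI i \<omega>) w1 n)))\<^sup>2)" for \<omega>
  have Sgn: "0 \<le> Sg \<omega>" for \<omega> unfolding Sg_def by (simp add: sum_nonneg)
  have mX: "(\<lambda>\<omega>. aux (\<lambda>i. XI i \<omega>) w1 n) \<in> borel_measurable MO" for n
    by (intro aux_m XI_meas)
  have "(\<lambda>\<omega>. (norm (gradF (aux (\<lambda>i. XI i \<omega>) w1 n)))\<^sup>2) \<in> borel_measurable MO" for n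
    using borel_measurable_continuous_on[OF gradF_cont mX[of n]] by measurable
  then have [measurable]: "Sg \<in> borel_measurable MO"
    unfolding Sg_def by (intro borel_measurable_sum) auto
  have [measurable]: "(\<lambda>\<omega>. F (aux (\<lambda>i. XI i \<omega>) w1 N)) \<in> borel_measurable MO"
    using borel_measurable_continuous_on[OF F_cont mX[of N]] .
  have Fw1: "F w1 \<ge> Fs"
  proof -
    obtain \<omega> where "\<omega> \<in> space MO" using prob_space.not_empty[OF prob] by auto
    from inU[OF this, of 0] show ?thesis by simp
  qed
  have "(\<integral>\<^sup>+\<omega>. ennreal ((1 / real N) * Sg \<omega>) \<partial>MO)
      \<le> (\<integral>\<^sup>+\<omega>. ennreal (1 / (real N * cc)) * (ennreal (F (aux (\<lambda>i. XI i \<omega>) w1 N) - Fs) + ennreal (cc * Sg \<omega>)) \<partial>MO)"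
  proof (intro nn_integral_mono)
    fix \<omega>
    have "ennreal ((1 / real N) * Sg \<omega>) = ennreal (1 / (real N * cc)) * ennreal (cc * Sg \<omega>)"
      using ccp Np Sgn[of \<omega>] by (simp add: ennreal_mult[symmetric])
    also have "\<dots> \<le> ennreal (1 / (real N * cc)) * (ennreal (F (aux (\<lambda>i. XI i \<omega>) w1 N) - Fs) + ennreal (cc * Sg \<omega>))"
      by (intro mult_left_mono) auto
    finally show "ennreal ((1 / real N) * Sg \<omega>) \<le> \<dots>" .
  qed
  also have "\<dots> = ennreal (1 / (real N * cc)) * (\<integral>\<^sup>+\<omega>. ennreal (F (aux (\<lambda>i. XI i \<omega>) w1 N) - Fs) + ennreal (cc * Sg \<omega>) \<partial>MO)"
    by (rule nn_integral_cmult) measurable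
  also have "\<dots> \<le> ennreal (1 / (real N * cc)) * ennreal (F w1 - Fs + real N * Cc)"
    using outer[OF inU, of N] unfolding Sg_def cc_def by (intro mult_left_mono) auto
  also have "\<dots> = ennreal ((F w1 - Fs + real N * Cc) / (real N * cc))"
  proof -
    have "0 \<le> 1 / (real N * cc)" using ccp Np by simp
    moreover have "0 \<le> F w1 - Fs + real N * Cc" using Fw1 Cc_nonneg Np by simp
    ultimately have "ennreal (1 / (real N * cc)) * ennreal (F w1 - Fs + real N * Cc) = ennreal (1 / (real N * cc) * (F w1 - Fs + real N * Cc))"
      by (rule ennreal_mult[symmetric])
    then show ?thesis by simp
  qed
  also have "(F w1 - Fs + real N * Cc) / (real N * cc) = 2 * (F w1 - Fs) / (real N * (real K - 1 + \<delta>) * gbar)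
             + L * real K * gbar * M / (real Bb * (real K - 1 + \<delta>))
               * (real K / real P + L * (2 * real K - 1) * (real K - 1) * gbar / 6)"
  proof -
    define D0 where "D0 = real K - 1 + \<delta>"
    have D0p: "0 < D0" unfolding D0_def using K_real delta by simp
    have "(F w1 - Fs + real N * Cc) / (real N * cc) = 2 * (F w1 - Fs) / (real N * D0 * gbar) + 2 * Cc / (gbar * D0)"
      unfolding cc_def D0_def[symmetric] using Np gbar_pos D0p by (simp add: field_simps)
    also have "2 * Cc / (gbar * D0) = L * real K * gbar * M / (real Bb * D0)
               * (real K / real P + L * (2 * real K - 1) * (real K - 1) * gbar / 6)"
      unfolding Cc_def using gbar_pos D0p Bb_real by (simp add: field_simps power2_eq_square)
    finally show ?thesis unfolding D0_def .
  qed
  finally show ?thesis unfolding Sg_def .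
qed

end

theorem theorem1:
  fixes F :: "'a::euclidean_space \<Rightarrow> real"
    and gradF :: "'a \<Rightarrow> 'a"
    and L M Fstar gbar \<delta> :: real
    and P K Bbar N :: nat
    and D :: "'x measure"
    and G :: "'a \<Rightarrow> 'x \<Rightarrow> 'a"
    and M\<^sub>\<Omega> :: "'b measure"
    and xi :: "nat \<Rightarrow> nat \<Rightarrow> nat \<Rightarrow> nat \<Rightarrow> 'b \<Rightarrow> 'x"
    and w1 :: 'a
    and U :: "'a set"
  assumes deriv: "\<And>w. (F has_derivative (\<lambda>h. gradF w \<bullet> h)) (at w)"
    and L_pos: "L > 0"
    and lipschitz: "\<And>w w'. norm (gradF w - gradF w') \<le> L * norm (w - w')"
    and D_prob: "prob_space D"
    and G_meas: "(\<lambda>(w, x). G w x) \<in> borel_measurable (borel \<Otimes>\<^sub>M D)"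
    and G_int: "\<And>w. integrable D (G w)"
    and G_sq_int: "\<And>w. integrable D (\<lambda>x. (norm (G w x))\<^sup>2)"
    and unbiased: "\<And>w. (\<integral>x. G w x \<partial>D) = gradF w"
    and M_nonneg: "M \<ge> 0"
    and variance: "\<And>w. (\<integral>x. (norm (G w x))\<^sup>2 \<partial>D) - (norm (\<integral>x. G w x \<partial>D))\<^sup>2 \<le> M"
    and P_pos: "P \<ge> 1" and K_pos: "K \<ge> 1"
    and gbar_pos: "gbar > 0" and Bbar_pos: "Bbar \<ge> 1"
    and prob: "prob_space M\<^sub>\<Omega>"
    and xi_meas: "\<And>n j k s. 1 \<le> n \<Longrightarrow> j \<in> {1..P} \<Longrightarrow> k \<in> {1..K} \<Longrightarrow> s \<in> {1..Bbar} \<Longrightarrow>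
        xi n j k s \<in> measurable M\<^sub>\<Omega> D"
    and xi_indep: "prob_space.indep_vars M\<^sub>\<Omega> (\<lambda>_. D) (\<lambda>(n, j, k, s). xi n j k s)
                     {(n, j, k, s). 1 \<le> n \<and> j \<in> {1..P} \<and> k \<in> {1..K} \<and> s \<in> {1..Bbar}}"
    and xi_distr: "\<And>n j k s. 1 \<le> n \<Longrightarrow> j \<in> {1..P} \<Longrightarrow> k \<in> {1..K} \<Longrightarrow> s \<in> {1..Bbar} \<Longrightarrow>
        distr M\<^sub>\<Omega> D (xi n j k s) = D"
    and U_open: "open U"
    and F_lower: "\<And>w. w \<in> U \<Longrightarrow> F w \<ge> Fstar"
    and iterates_in_U: "\<And>\<omega> n j k. \<omega> \<in> space M\<^sub>\<Omega> \<Longrightarrow> n \<ge> 1 \<Longrightarrow> j \<in> {1..P} \<Longrightarrow> k \<le> K \<Longrightarrow>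
        kavg_local G (\<lambda>_. gbar) (\<lambda>_. Bbar) xi n j
          (kavg_tilde G (\<lambda>_. gbar) (\<lambda>_. Bbar) xi P K w1 n \<omega>) k \<omega> \<in> U"
    and delta: "0 < \<delta>" "\<delta> < 1"
    and cond1: "1 \<ge> L\<^sup>2 * gbar\<^sup>2 * (real K + 1) * (real K - 2) / 2 + L * gbar * real K"
    and cond2: "1 - \<delta> \<ge> L\<^sup>2 * gbar\<^sup>2"
    and N_pos: "N \<ge> 1"
  shows "(\<integral>\<^sup>+ \<omega>. ennreal ((1 / real N) *
            (\<Sum>j=1..N. (norm (gradF (kavg_tilde G (\<lambda>_. gbar) (\<lambda>_. Bbar) xi P K w1 j \<omega>)))\<^sup>2)) \<partial>M\<^sub>\<Omega>)
         \<le> ennreal (2 * (F w1 - Fstar) / (real N * (real K - 1 + \<delta>) * gbar)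
             + L * real K * gbar * M / (real Bbar * (real K - 1 + \<delta>))
               * (real K / real P + L * (2 * real K - 1) * (real K - 1) * gbar / 6))"
proof -
  interpret kavg2 F gradF L M gbar P K Bbar D G "M\<^sub>\<Omega>" xi \<delta>
    by (rule kavg2.intro[OF kavg.intro[OF deriv L_pos lipschitz D_prob G_meas G_int G_sq_int unbiased
          M_nonneg variance P_pos K_pos gbar_pos Bbar_pos prob xi_meas xi_indep xi_distr]
          kavg2_axioms.intro[OF delta(1) delta(2) cond1 cond2]])
  have inU: "F (aux (\<lambda>i. XI i \<omega>) w1 m) \<ge> Fstar" if \<omega>: "\<omega> \<in> space M\<^sub>\<Omega>" for \<omega> m
  proof -
    have "kavg_local G (\<lambda>_. gbar) (\<lambda>_. Bbar) xi (Suc m) 1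
          (kavg_tilde G (\<lambda>_. gbar) (\<lambda>_. Bbar) xi P K w1 (Suc m) \<omega>) 0 \<omega> \<in> U"
      by (rule iterates_in_U) (use \<omega> P_pos in auto)
    then have "aux (\<lambda>i. XI i \<omega>) w1 m \<in> U"
      by (simp add: kavg_tilde_def kavg_aux_eq)
    then show ?thesis by (rule F_lower)
  qed
  have eq: "(\<Sum>j=1..N. (norm (gradF (kavg_tilde G (\<lambda>_. gbar) (\<lambda>_. Bbar) xi P K w1 j \<omega>)))\<^sup>2)
      = (\<Sum>n<N. (norm (gradF (aux (\<lambda>i. XI i \<omega>) w1 n)))\<^sup>2)" for \<omega>
    by (simp add: sum.atLeast1_atMost_eq kavg_tilde_def kavg_aux_eq)
  show ?thesis
    unfolding eq using final[OF inU N_pos] by simp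
qed

end
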